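(* Let $(\mathcal{C},f,m)$ be a Floer triple over a field $\mathbb{F}$. Then the kernel of the canonical map $\kappa\colon\overline{HM}\to\underline{HM}$ is isomorphic to $\varprojlim^1_{a\to-\infty}\big(\varinjlim_{b\to\infty}HM_a^b\big)$.
   Context: A Floer triple $(\mathcal{C},f,m)$ over $\mathbb{F}$: a set $\mathcal{C}$, $f\colon\mathcal{C}\to\mathbb{R}$, $m\colon\mathcal{C}\times\mathcal{C}\to\mathbb{F}$ with (i) $\mathcal{C}_a^b=\{c: a\le f(c)\le b\}$ finite for all $a\le b$; (ii) $m(c_1,c_2)\ne0\Rightarrow f(c_1)<f(c_2)$; (iii) $\sum_{c_2}m(c_1,c_2)m(c_2,c_3)=0$ for all $c_1,c_3$. $CM_a^b$ is the $\mathbb{F}$-vector space with basis $\mathcal{C}_a^b$ (zero if $a>b$), $\partial_a^b c=\sum_{c'\in\mathcal{C}_a^b}m(c',c)c'$, $HM_a^b$ its homology. For $a_1\le a_2$, $p^b_{a_2,a_1}\colon CM^b_{a_1}\to CM^b_{a_2}$ sends $c\mapsto c$ if $f(c)\ge a_2$, else $0$; for $b_1\le b_2$, $i_a^{b_2,b_1}$ is the inclusion. $\overline{HM}=\varinjlim_b\varprojlim_a HM_a^b$ and $\underline{HM}=\varprojlim_a\varinjlim_b HM_a^b$, where inverse limits over $a$ are taken with respect to the maps induced by $p$ (compatible families) and direct limits over $b$ with respect to the maps induced by $i$; $\kappa$ sends the class of $(x_a)_a\in\varprojlim_aHM_a^b$ to $(\iota_a^bx_a)_a$ with $\iota_a^b\colon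 HM_a^b\to\varinjlim_{b'}HM_a^{b'}$ canonical. For a system $(G_a)_{a\in\mathbb{R}}$ with maps $\pi_{a_2,a_1}\colon G_{a_1}\to G_{a_2}$ ($a_1\le a_2$), choose $a_1\ge a_2\ge\dots$ with $a_j\to-\infty$ and define $\varprojlim^1G=\mathrm{coker}\,\Delta$, where $\Delta\colon\prod_jG_{a_j}\to\prod_jG_{a_j}$, $(x_j)_j\mapsto(x_j-\pi_{a_j,a_{j+1}}x_{j+1})_j$; this is independent of the chosen sequence up to canonical isomorphism. Here $G_a=\varinjlim_b HM_a^b$ with the maps induced by $Hp$. *)

theory Defs
  imports Complex_Main
begin

record ('a, 'k) vs =
  vcarr :: "'a set"
  vzero :: 'a
  vadd  :: "'a \<Rightarrow> 'a \<Rightarrow> 'a"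
  vsmul :: "'k \<Rightarrow> 'a \<Rightarrow> 'a"

definition vs_iso :: "('a, 'k) vs \<Rightarrow> ('b, 'k) vs \<Rightarrow> bool" where
  "vs_iso S T \<longleftrightarrow> (\<exists>\<phi>. bij_betw \<phi> (vcarr S) (vcarr T)
     \<and> (\<forall>x\<in>vcarr S. \<forall>y\<in>vcarr S. \<phi> (vadd S x y) = vadd T (\<phi> x) (\<phi> y))
     \<and> (\<forall>k. \<forall>x\<in>vcarr S. \<phi> (vsmul S k x) = vsmul T k (\<phi> x)))"

definition subv :: "('a, 'k) vs \<Rightarrow> 'a set \<Rightarrow> ('a, 'k) vs" where
  "subv S V = \<lparr>vcarr = vcarr S \<inter> V, vzero = vzero S, vadd = vadd S, vsmul = vsmul S\<rparr>"

definition quotv :: "('a, 'k) vs \<Rightarrow> 'a set \<Rightarrow> ('a set, 'k) vs" where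
  "quotv S W = \<lparr>vcarr = (\<lambda>x. {vadd S x w | w. w \<in> W}) ` vcarr S,
     vzero = {vadd S (vzero S) w | w. w \<in> W},
     vadd = (\<lambda>X Y. {vadd S x y | x y. x \<in> X \<and> y \<in> Y}),
     vsmul = (\<lambda>k X. {vadd S (vsmul S k x) w | x w. x \<in> X \<and> w \<in> W})\<rparr>"

definition qmap :: "('b, 'k) vs \<Rightarrow> 'b set \<Rightarrow> ('a \<Rightarrow> 'b) \<Rightarrow> 'a set \<Rightarrow> 'b set" where
  "qmap T W \<phi> X = {vadd T (\<phi> x) w | x w. x \<in> X \<and> w \<in> W}"

definition prodv :: "('i \<Rightarrow> ('a, 'k) vs) \<Rightarrow> ('i \<Rightarrow> 'a, 'k) vs" where
  "prodv S = \<lparr>vcarr = {x. \<forall>i. x i \<in> vcarr (S i)},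
     vzero = (\<lambda>i. vzero (S i)),
     vadd = (\<lambda>x y i. vadd (S i) (x i) (y i)),
     vsmul = (\<lambda>k x i. vsmul (S i) k (x i))\<rparr>"

text \<open>Inverse limit of a system indexed by the reals, with maps
  \<open>\<pi> a2 a1 : G a1 \<rightarrow> G a2\<close> for \<open>a1 \<le> a2\<close> (compatible families).\<close>
definition invlimv :: "(real \<Rightarrow> ('a, 'k) vs) \<Rightarrow> (real \<Rightarrow> real \<Rightarrow> 'a \<Rightarrow> 'a) \<Rightarrow> (real \<Rightarrow> 'a, 'k) vs" where
  "invlimv G \<pi> = subv (prodv G) {x. \<forall>a1 a2. a1 \<le> a2 \<longrightarrow> \<pi> a2 a1 (x a1) = x a2}"

text \<open>Direct limit of a system indexed by the reals, with maps
  \<open>\<iota> b2 b1 : G b1 \<rightarrow> G b2\<close> for \<open>b1 \<le> b2\<close>: equivalence classes of pairs (b, x).\<close>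
definition dircls :: "(real \<Rightarrow> ('a, 'k) vs) \<Rightarrow> (real \<Rightarrow> real \<Rightarrow> 'a \<Rightarrow> 'a) \<Rightarrow> real \<Rightarrow> 'a \<Rightarrow> (real \<times> 'a) set" where
  "dircls G \<iota> b x = {(d, v). v \<in> vcarr (G d) \<and> (\<exists>e. b \<le> e \<and> d \<le> e \<and> \<iota> e d v = \<iota> e b x)}"

definition dirlimv :: "(real \<Rightarrow> ('a, 'k) vs) \<Rightarrow> (real \<Rightarrow> real \<Rightarrow> 'a \<Rightarrow> 'a) \<Rightarrow> ((real \<times> 'a) set, 'k) vs" where
  "dirlimv G \<iota> = \<lparr>vcarr = {dircls G \<iota> b x | b x. x \<in> vcarr (G b)},
     vzero = (\<Union>b. dircls G \<iota> b (vzero (G b))),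
     vadd = (\<lambda>\<xi> \<eta>. \<Union>{dircls G \<iota> e (vadd (G e) (\<iota> e b x) (\<iota> e b' y)) | e b x b' y.
                       (b, x) \<in> \<xi> \<and> (b', y) \<in> \<eta> \<and> b \<le> e \<and> b' \<le> e}),
     vsmul = (\<lambda>k \<xi>. \<Union>{dircls G \<iota> b (vsmul (G b) k x) | b x. (b, x) \<in> \<xi>})\<rparr>"

definition dirmap :: "(real \<Rightarrow> ('b, 'k) vs) \<Rightarrow> (real \<Rightarrow> real \<Rightarrow> 'b \<Rightarrow> 'b) \<Rightarrow> (real \<Rightarrow> 'a \<Rightarrow> 'b)
    \<Rightarrow> (real \<times> 'a) set \<Rightarrow> (real \<times> 'b) set" where
  "dirmap G' \<iota>' \<psi> \<xi> = \<Union>{dircls G' \<iota>' b (\<psi> b x) | b x. (b, x) \<in> \<xi>}"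

definition floer_triple :: "'c set \<Rightarrow> ('c \<Rightarrow> real) \<Rightarrow> ('c \<Rightarrow> 'c \<Rightarrow> 'k::field) \<Rightarrow> bool" where
  "floer_triple C f m \<longleftrightarrow>
     (\<forall>a b. a \<le> b \<longrightarrow> finite {c \<in> C. a \<le> f c \<and> f c \<le> b})
   \<and> (\<forall>c1\<in>C. \<forall>c2\<in>C. m c1 c2 \<noteq> 0 \<longrightarrow> f c1 < f c2)
   \<and> (\<forall>c1\<in>C. \<forall>c3\<in>C. (\<Sum>c2 \<in> {c2 \<in> C. m c1 c2 * m c2 c3 \<noteq> 0}. m c1 c2 * m c2 c3) = 0)"

definition Cab :: "'c set \<Rightarrow> ('c \<Rightarrow> real) \<Rightarrow> real \<Rightarrow> real \<Rightarrow> 'c set" where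
  "Cab C f a b = {c \<in> C. a \<le> f c \<and> f c \<le> b}"

text \<open>Chains: finitely supported \<open>\<FF>\<close>-linear combinations of elements of \<open>C_a^b\<close>.\<close>
definition CMv :: "'c set \<Rightarrow> ('c \<Rightarrow> real) \<Rightarrow> real \<Rightarrow> real \<Rightarrow> ('c \<Rightarrow> 'k::field, 'k) vs" where
  "CMv C f a b = \<lparr>vcarr = {x. \<forall>c. x c \<noteq> 0 \<longrightarrow> c \<in> Cab C f a b},
     vzero = (\<lambda>_. 0),
     vadd = (\<lambda>x y c. x c + y c),
     vsmul = (\<lambda>k x c. k * x c)\<rparr>"

definition bd :: "'c set \<Rightarrow> ('c \<Rightarrow> real) \<Rightarrow> ('c \<Rightarrow> 'c \<Rightarrow> 'k::field) \<Rightarrow> real \<Rightarrow> real \<Rightarrow> ('c \<Rightarrow> 'k) \<Rightarrow> ('c \<Rightarrow> 'k)" where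
  "bd C f m a b x = (\<lambda>c'. if c' \<in> Cab C f a b then (\<Sum>c \<in> Cab C f a b. m c' c * x c) else 0)"

definition cycles :: "'c set \<Rightarrow> ('c \<Rightarrow> real) \<Rightarrow> ('c \<Rightarrow> 'c \<Rightarrow> 'k::field) \<Rightarrow> real \<Rightarrow> real \<Rightarrow> ('c \<Rightarrow> 'k) set" where
  "cycles C f m a b = {x \<in> vcarr (CMv C f a b). bd C f m a b x = (\<lambda>_. 0)}"

definition bdries :: "'c set \<Rightarrow> ('c \<Rightarrow> real) \<Rightarrow> ('c \<Rightarrow> 'c \<Rightarrow> 'k::field) \<Rightarrow> real \<Rightarrow> real \<Rightarrow> ('c \<Rightarrow> 'k) set" where
  "bdries C f m a b = bd C f m a b ` vcarr (CMv C f a b)"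

text \<open>Homology \<open>HM_a^b\<close>; elements are cosets \<open>z + B\<close> of cycles.\<close>
definition HMv :: "'c set \<Rightarrow> ('c \<Rightarrow> real) \<Rightarrow> ('c \<Rightarrow> 'c \<Rightarrow> 'k::field) \<Rightarrow> real \<Rightarrow> real \<Rightarrow> (('c \<Rightarrow> 'k) set, 'k) vs" where
  "HMv C f m a b = quotv (subv (CMv C f a b) (cycles C f m a b)) (bdries C f m a b)"

text \<open>The projection \<open>p^b_{a2,a1}\<close> on chains (kills generators with \<open>f c < a2\<close>).\<close>
definition pmap :: "('c \<Rightarrow> real) \<Rightarrow> real \<Rightarrow> ('c \<Rightarrow> 'k::zero) \<Rightarrow> ('c \<Rightarrow> 'k)" where
  "pmap f a2 x = (\<lambda>c. if a2 \<le> f c then x c else 0)"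

text \<open>Induced map \<open>Hp : HM_{a1}^b \<rightarrow> HM_{a2}^b\<close>.\<close>
definition Hp :: "'c set \<Rightarrow> ('c \<Rightarrow> real) \<Rightarrow> ('c \<Rightarrow> 'c \<Rightarrow> 'k::field) \<Rightarrow> real \<Rightarrow> real \<Rightarrow> real
    \<Rightarrow> ('c \<Rightarrow> 'k) set \<Rightarrow> ('c \<Rightarrow> 'k) set" where
  "Hp C f m b a2 a1 X = qmap (CMv C f a2 b) (bdries C f m a2 b) (pmap f a2) X"

text \<open>Induced map \<open>Hi : HM_a^{b1} \<rightarrow> HM_a^{b2}\<close> of the inclusion.\<close>
definition Hi :: "'c set \<Rightarrow> ('c \<Rightarrow> real) \<Rightarrow> ('c \<Rightarrow> 'c \<Rightarrow> 'k::field) \<Rightarrow> real \<Rightarrow> real \<Rightarrow> real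
    \<Rightarrow> ('c \<Rightarrow> 'k) set \<Rightarrow> ('c \<Rightarrow> 'k) set" where
  "Hi C f m a b2 b1 X = qmap (CMv C f a b2) (bdries C f m a b2) id X"

text \<open>\<open>L_b = lim_{\<leftarrow> a} HM_a^b\<close> and the maps between them induced by Hi.\<close>
definition Lsys where
  "Lsys C f m b = invlimv (\<lambda>a. HMv C f m a b) (\<lambda>a2 a1. Hp C f m b a2 a1)"

definition iotaL where
  "iotaL C f m b2 b1 x = (\<lambda>a. Hi C f m a b2 b1 (x a))"

definition overHM where
  "overHM C f m = dirlimv (Lsys C f m) (iotaL C f m)"

text \<open>\<open>G_a = lim_{\<rightarrow> b} HM_a^b\<close> with maps induced by Hp.\<close>
definition Gsys where
  "Gsys C f m a = dirlimv (\<lambda>b. HMv C f m a b) (Hi C f m a)"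

definition piG where
  "piG C f m a2 a1 \<xi> = dirmap (\<lambda>b. HMv C f m a2 b) (Hi C f m a2) (\<lambda>b x. Hp C f m b a2 a1 x) \<xi>"

definition underHM where
  "underHM C f m = invlimv (Gsys C f m) (piG C f m)"

text \<open>The canonical map \<open>\<kappa>\<close>: class of \<open>(x_a)_a\<close> at level b maps to \<open>(\<iota>_a^b x_a)_a\<close>.\<close>
definition kappa where
  "kappa C f m \<xi> = (\<lambda>a. dirmap (\<lambda>b. HMv C f m a b) (Hi C f m a) (\<lambda>b x. x a) \<xi>)"

definition kerkappa where
  "kerkappa C f m = subv (overHM C f m) {\<xi>. kappa C f m \<xi> = vzero (underHM C f m)}"

text \<open>\<open>lim^1\<close> of \<open>(G_a)\<close> computed along the sequence \<open>aseq\<close>: cokernel of \<open>\<Delta>\<close>.\<close>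
definition Delta where
  "Delta C f m aseq x = (\<lambda>j. vadd (Gsys C f m (aseq j)) (x j)
      (vsmul (Gsys C f m (aseq j)) (-1) (piG C f m (aseq j) (aseq (Suc j)) (x (Suc j)))))"

definition lim1 where
  "lim1 C f m aseq = quotv (prodv (\<lambda>j. Gsys C f m (aseq j)))
      (Delta C f m aseq ` vcarr (prodv (\<lambda>j. Gsys C f m (aseq j))))"

end

theory Submission
  imports Defs "HOL-Library.Function_Algebras"
begin


definition NB :: "'c set \<Rightarrow> ('c \<Rightarrow> real) \<Rightarrow> real \<Rightarrow> ('c \<Rightarrow> 'k::zero) set" where
  "NB C f b = {x. \<forall>c. x c \<noteq> 0 \<longrightarrow> c \<in> C \<and> f c \<le> b}"

definition Dg :: "'c set \<Rightarrow> ('c \<Rightarrow> real) \<Rightarrow> ('c \<Rightarrow> 'c \<Rightarrow> 'k::field) \<Rightarrow> ('c \<Rightarrow> 'k) \<Rightarrow> ('c \<Rightarrow> 'k)" where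
  "Dg C f m x = (\<lambda>c'. if c' \<in> C then (\<Sum>c\<in>{c\<in>C. x c \<noteq> 0 \<and> f c' \<le> f c}. m c' c * x c) else 0)"

lemma sum_fun_apply: "(\<Sum>i\<in>I. g i) c = (\<Sum>i\<in>I. g i c)"
  by (induction I rule: infinite_finite_induct) auto

locale FT =
  fixes C :: "'c set" and f :: "'c \<Rightarrow> real" and m :: "'c \<Rightarrow> 'c \<Rightarrow> 'k::field"
  assumes ft: "floer_triple C f m"
begin

abbreviation "D \<equiv> Dg C f m"
abbreviation NN :: "real \<Rightarrow> ('c \<Rightarrow> 'k) set" where "NN b \<equiv> NB C f b"
abbreviation CM :: "real \<Rightarrow> real \<Rightarrow> ('c \<Rightarrow> 'k) set" where "CM a b \<equiv> vcarr (CMv C f a b)"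
abbreviation pm :: "real \<Rightarrow> ('c \<Rightarrow> 'k) \<Rightarrow> ('c \<Rightarrow> 'k)" where "pm a \<equiv> pmap f a"

lemma fin_Cab: "finite (Cab C f a b)"
proof (cases "a \<le> b")
  case True then show ?thesis using ft unfolding floer_triple_def Cab_def by blast
next
  case False then have "Cab C f a b = {}" unfolding Cab_def by auto
  then show ?thesis by simp
qed

lemma m_nz: "c1 \<in> C \<Longrightarrow> c2 \<in> C \<Longrightarrow> m c1 c2 \<noteq> 0 \<Longrightarrow> f c1 < f c2"
  using ft unfolding floer_triple_def by blast

lemma m_zero: "c1 \<in> C \<Longrightarrow> c2 \<in> C \<Longrightarrow> f c2 \<le> f c1 \<Longrightarrow> m c1 c2 = 0"
  using m_nz by force

lemma dd0: "c1 \<in> C \<Longrightarrow> c3 \<in> C \<Longrightarrow> (\<Sum>c2 \<in> {c2 \<in> C. m c1 c2 * m c2 c3 \<noteq> 0}. m c1 c2 * m c2 c3) = 0"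
  using ft unfolding floer_triple_def by blast

lemma CM_iff: "x \<in> CM a b \<longleftrightarrow> (\<forall>c. x c \<noteq> 0 \<longrightarrow> c \<in> C \<and> a \<le> f c \<and> f c \<le> b)"
  by (simp add: CMv_def Cab_def)

lemma CM_NB: "x \<in> CM a b \<Longrightarrow> x \<in> NN b"
  by (simp add: CM_iff NB_def)

lemma NB_mono: "x \<in> NN b \<Longrightarrow> b \<le> b' \<Longrightarrow> x \<in> NN b'"
  by (force simp: NB_def)

lemma CM_mono: "x \<in> CM a b \<Longrightarrow> b \<le> b' \<Longrightarrow> x \<in> CM a b'"
  by (force simp: CM_iff)

lemma pm_CM: "x \<in> NN b \<Longrightarrow> pm a x \<in> CM a b"
  by (auto simp: CM_iff NB_def pmap_def)

lemma pm_CM2: "x \<in> CM a' b \<Longrightarrow> pm a x \<in> CM a b"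
  by (auto simp: CM_iff pmap_def)

lemma pm_id: "x \<in> CM a b \<Longrightarrow> pm a x = x"
  by (auto simp: CM_iff pmap_def fun_eq_iff)

lemma pm_id': "x \<in> CM a b \<Longrightarrow> a \<le> a' \<Longrightarrow> pm a' x = pm a' (pm a x)"
  by (auto simp: CM_iff pmap_def fun_eq_iff)

lemma pm_pm: "a' \<le> a \<Longrightarrow> pm a (pm a' x) = pm a x"
  by (auto simp: pmap_def fun_eq_iff)

lemma pm_add: "pm a (x + y) = pm a x + pm a y"
  by (auto simp: pmap_def fun_eq_iff)
lemma pm_diff: "pm a (x - y) = pm a x - pm a y"
  by (auto simp: pmap_def fun_eq_iff)
lemma pm_uminus: "pm a (- x) = - pm a x"
  by (auto simp: pmap_def fun_eq_iff)
lemma pm_zero[simp]: "pm a 0 = 0"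
  by (auto simp: pmap_def fun_eq_iff)
lemma pm_smul: "pm a (\<lambda>c. k * x c) = (\<lambda>c. k * pm a x c)"
  by (auto simp: pmap_def fun_eq_iff)
lemma pm_sum: "pm a (\<Sum>i\<in>I. g i) = (\<Sum>i\<in>I. pm a (g i))"
  by (auto simp: pmap_def fun_eq_iff sum_fun_apply)

lemma NB_add: "x \<in> NN b \<Longrightarrow> y \<in> NN b \<Longrightarrow> x + y \<in> NN b"
  by (force simp: NB_def)
lemma NB_diff: "x \<in> NN b \<Longrightarrow> y \<in> NN b \<Longrightarrow> x - y \<in> NN b"
  by (force simp: NB_def)
lemma NB_uminus: "x \<in> NN b \<Longrightarrow> - x \<in> NN b"
  by (force simp: NB_def)
lemma NB_zero[simp]: "0 \<in> NN b"
  by (force simp: NB_def)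
lemma NB_smul: "x \<in> NN b \<Longrightarrow> (\<lambda>c. k * x c) \<in> NN b"
  by (force simp: NB_def)
lemma NB_sum: "finite I \<Longrightarrow> (\<And>i. i \<in> I \<Longrightarrow> g i \<in> NN b) \<Longrightarrow> (\<Sum>i\<in>I. g i) \<in> NN b"
  by (induction I rule: finite_induct) (auto intro: NB_add)

lemma CM_add: "x \<in> CM a b \<Longrightarrow> y \<in> CM a b \<Longrightarrow> x + y \<in> CM a b"
  by (force simp: CM_iff)
lemma CM_diff: "x \<in> CM a b \<Longrightarrow> y \<in> CM a b \<Longrightarrow> x - y \<in> CM a b"
  by (force simp: CM_iff)
lemma CM_uminus: "x \<in> CM a b \<Longrightarrow> - x \<in> CM a b"
  by (force simp: CM_iff)
lemma CM_zero[simp]: "0 \<in> CM a b"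
  by (force simp: CM_iff)
lemma CM_smul: "x \<in> CM a b \<Longrightarrow> (\<lambda>c. k * x c) \<in> CM a b"
  by (force simp: CM_iff)
lemma CM_sum: "finite I \<Longrightarrow> (\<And>i. i \<in> I \<Longrightarrow> g i \<in> CM a b) \<Longrightarrow> (\<Sum>i\<in>I. g i) \<in> CM a b"
  by (induction I rule: finite_induct) (auto intro: CM_add)

lemma D_notC: "c' \<notin> C \<Longrightarrow> D x c' = 0"
  by (simp add: Dg_def)

lemma D_alt: assumes "x \<in> NN b" "c' \<in> C"
  shows "D x c' = (\<Sum>c\<in>Cab C f (f c') b. m c' c * x c)"
proof -
  have "{c\<in>C. x c \<noteq> 0 \<and> f c' \<le> f c} \<subseteq> Cab C f (f c') b"
    using assms(1) by (auto simp: NB_def Cab_def)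
  then have "(\<Sum>c\<in>Cab C f (f c') b. m c' c * x c) = (\<Sum>c\<in>{c\<in>C. x c \<noteq> 0 \<and> f c' \<le> f c}. m c' c * x c)"
    by (intro sum.mono_neutral_right fin_Cab) (auto simp: Cab_def)
  then show ?thesis using assms(2) by (simp add: Dg_def)
qed


lemma D_NB: assumes "x \<in> NN b" shows "D x \<in> NN b"
proof -
  { fix c' assume nz: "D x c' \<noteq> 0"
    then have c': "c' \<in> C" using D_notC by blast
    from nz c' have "(\<Sum>c\<in>Cab C f (f c') b. m c' c * x c) \<noteq> 0" using D_alt[OF assms c'] by simp
    then obtain c where "c \<in> Cab C f (f c') b" by (meson sum.neutral)
    then have "f c' \<le> b" by (auto simp: Cab_def)
    with c' have "c' \<in> C \<and> f c' \<le> b" by simp }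
  then show ?thesis by (auto simp: NB_def)
qed

lemma D_add: assumes "x \<in> NN b" "y \<in> NN b" shows "D (x + y) = D x + D y"
proof (rule ext)
  fix c' show "D (x + y) c' = (D x + D y) c'"
  proof (cases "c' \<in> C")
    case True
    then show ?thesis using D_alt[OF NB_add[OF assms] True] D_alt[OF assms(1) True] D_alt[OF assms(2) True]
      by (simp add: distrib_left sum.distrib)
  qed (simp add: D_notC)
qed

lemma D_smul: assumes "x \<in> NN b" shows "D (\<lambda>c. k * x c) = (\<lambda>c. k * D x c)"
proof (rule ext)
  fix c' show "D (\<lambda>c. k * x c) c' = k * D x c'"
  proof (cases "c' \<in> C")
    case True
    then show ?thesis using D_alt[OF NB_smul[OF assms] True] D_alt[OF assms(1) True]
      by (simp add: sum_distrib_left algebra_simps)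
  qed (simp add: D_notC)
qed

lemma D_zero[simp]: "D 0 = 0"
  by (simp add: Dg_def fun_eq_iff)

lemma D_uminus: assumes "x \<in> NN b" shows "D (- x) = - D x"
proof -
  have e: "- x = (\<lambda>c. (-1) * x c)" by (simp add: fun_eq_iff)
  have "D (- x) = (\<lambda>c. (-1) * D x c)" unfolding e by (rule D_smul[OF assms])
  then show ?thesis by (simp add: fun_eq_iff)
qed

lemma D_diff: assumes "x \<in> NN b" "y \<in> NN b" shows "D (x - y) = D x - D y"
  using D_add[OF assms(1) NB_uminus[OF assms(2)]] D_uminus[OF assms(2)] by simp

lemma D_sum: "finite I \<Longrightarrow> (\<And>i. i \<in> I \<Longrightarrow> g i \<in> NN b) \<Longrightarrow> D (\<Sum>i\<in>I. g i) = (\<Sum>i\<in>I. D (g i))"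
proof (induction I rule: finite_induct)
  case (insert i I)
  have e1: "sum g (insert i I) = g i + sum g I" by (rule sum.insert[OF insert(1,2)])
  have e2: "(\<Sum>i\<in>insert i I. D (g i)) = D (g i) + (\<Sum>i\<in>I. D (g i))" by (rule sum.insert[OF insert(1,2)])
  have "D (g i + sum g I) = D (g i) + D (sum g I)"
    using insert.prems by (intro D_add[of _ b] NB_sum insert(1)) auto
  moreover have ih: "D (sum g I) = (\<Sum>i\<in>I. D (g i))" using insert.IH insert.prems by blast
  ultimately show ?case unfolding e1 e2 by (simp only: ih)
qed simp

lemma DD: assumes "x \<in> NN b" shows "D (D x) = 0"
proof (rule ext)
  fix c'' show "D (D x) c'' = 0 c''"
  proof (cases "c'' \<in> C")
    case True
    define A where "A = Cab C f (f c'') b"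
    have finA: "finite A" unfolding A_def by (rule fin_Cab)
    have inner: "D x c' = (\<Sum>c\<in>A. m c' c * x c)" if "c' \<in> A" for c'
    proof -
      have c': "c' \<in> C" "f c'' \<le> f c'" using that by (auto simp: A_def Cab_def)
      have "(\<Sum>c\<in>A. m c' c * x c) = (\<Sum>c\<in>Cab C f (f c') b. m c' c * x c)"
        using c' by (intro sum.mono_neutral_right finA) (auto simp: A_def Cab_def intro!: m_zero)
      then show ?thesis using D_alt[OF assms c'(1)] by simp
    qed
    have "D (D x) c'' = (\<Sum>c'\<in>A. m c'' c' * D x c')"
      using D_alt[OF D_NB[OF assms] True] by (simp add: A_def)
    also have "\<dots> = (\<Sum>c'\<in>A. \<Sum>c\<in>A. m c'' c' * (m c' c * x c))"
      by (intro sum.cong refl) (simp add: inner sum_distrib_left)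
    also have "\<dots> = (\<Sum>c\<in>A. \<Sum>c'\<in>A. m c'' c' * (m c' c * x c))"
      by (rule sum.swap)
    also have "\<dots> = (\<Sum>c\<in>A. x c * (\<Sum>c'\<in>A. m c'' c' * m c' c))"
      by (simp add: sum_distrib_left algebra_simps)
    also have "\<dots> = 0"
    proof (intro sum.neutral ballI)
      fix c assume cA: "c \<in> A"
      then have cC: "c \<in> C" and fc: "f c \<le> b" by (auto simp: A_def Cab_def)
      have "(\<Sum>c'\<in>A. m c'' c' * m c' c) = (\<Sum>c2 \<in> {c2 \<in> C. m c'' c2 * m c2 c \<noteq> 0}. m c'' c2 * m c2 c)"
      proof (intro sum.mono_neutral_right finA)
        show "{c2 \<in> C. m c'' c2 * m c2 c \<noteq> 0} \<subseteq> A"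
        proof
          fix c2 assume "c2 \<in> {c2 \<in> C. m c'' c2 * m c2 c \<noteq> 0}"
          then have "c2 \<in> C" "m c'' c2 \<noteq> 0" "m c2 c \<noteq> 0" by auto
          with m_nz[OF True] m_nz[OF _ cC] fc show "c2 \<in> A" by (force simp: A_def Cab_def)
        qed
      qed (auto simp: A_def Cab_def)
      then show "x c * (\<Sum>c'\<in>A. m c'' c' * m c' c) = 0" using dd0[OF True cC] by simp
    qed
    finally show ?thesis by simp
  qed (simp add: D_notC)
qed

lemma D_pm: assumes "x \<in> NN b" shows "pm a (D (pm a x)) = pm a (D x)"
proof (rule ext)
  fix c' show "pm a (D (pm a x)) c' = pm a (D x) c'"
  proof (cases "c' \<in> C \<and> a \<le> f c'")
    case True
    have px: "pm a x \<in> NN b" using assms by (auto simp: NB_def pmap_def)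
    have "(\<Sum>c\<in>Cab C f (f c') b. m c' c * pm a x c) = (\<Sum>c\<in>Cab C f (f c') b. m c' c * x c)"
      using True by (intro sum.cong refl) (auto simp: Cab_def pmap_def)
    then show ?thesis using True D_alt[OF assms] D_alt[OF px] by (simp add: pmap_def)
  qed (auto simp: pmap_def D_notC)
qed

lemma D_pm2: assumes "x \<in> NN b" "a \<le> f c'" shows "D (pm a x) c' = D x c'"
  using fun_cong[OF D_pm[OF assms(1), of a], of c'] assms(2) by (simp add: pmap_def)

lemma bd_eq: assumes "x \<in> CM a b" shows "bd C f m a b x = pm a (D x)"
proof (rule ext)
  fix c' show "bd C f m a b x c' = pm a (D x) c'"
  proof (cases "c' \<in> Cab C f a b")
    case True
    then have c': "c' \<in> C" "a \<le> f c'" "f c' \<le> b" by (auto simp: Cab_def)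
    have "(\<Sum>c\<in>Cab C f a b. m c' c * x c) = (\<Sum>c\<in>Cab C f (f c') b. m c' c * x c)"
      using c' by (intro sum.mono_neutral_right fin_Cab) (auto simp: Cab_def intro!: m_zero)
    then show ?thesis using True c' D_alt[OF CM_NB[OF assms] c'(1)] by (simp add: bd_def pmap_def)
  next
    case False
    have "D x c' = 0" if "c' \<in> C" "a \<le> f c'"
    proof -
      from False that have "b < f c'" by (auto simp: Cab_def)
      then have "Cab C f (f c') b = {}" by (auto simp: Cab_def)
      then show ?thesis using D_alt[OF CM_NB[OF assms] that(1)] by simp
    qed
    then show ?thesis using False D_notC[of c' x] by (auto simp: bd_def pmap_def)
  qed
qed

lemma cycles_iff: "x \<in> cycles C f m a b \<longleftrightarrow> x \<in> CM a b \<and> pm a (D x) = 0"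
  by (auto simp: cycles_def bd_eq)

lemma bdries_iff: "y \<in> bdries C f m a b \<longleftrightarrow> (\<exists>x\<in>CM a b. y = pm a (D x))"
  by (auto simp: bdries_def bd_eq)

lemma bdries_CM: "y \<in> bdries C f m a b \<Longrightarrow> y \<in> CM a b"
  by (auto simp: bdries_iff intro!: pm_CM[OF D_NB[OF CM_NB]])

lemma bdries_cycles: "y \<in> bdries C f m a b \<Longrightarrow> y \<in> cycles C f m a b"
proof -
  assume "y \<in> bdries C f m a b"
  then obtain x where x: "x \<in> CM a b" "y = pm a (D x)" by (auto simp: bdries_iff)
  have "pm a (D y) = pm a (D (D x))" using x D_pm[OF D_NB[OF CM_NB[OF x(1)]]] by simp
  then show ?thesis using bdries_CM[OF \<open>y \<in> _\<close>] DD[OF CM_NB[OF x(1)]] by (simp add: cycles_iff)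
qed

end



definition hcls :: "'c set \<Rightarrow> ('c \<Rightarrow> real) \<Rightarrow> ('c \<Rightarrow> 'c \<Rightarrow> 'k::field) \<Rightarrow> real \<Rightarrow> real \<Rightarrow> ('c \<Rightarrow> 'k) \<Rightarrow> ('c \<Rightarrow> 'k) set" where
  "hcls C f m a b z = {z + w | w. w \<in> bdries C f m a b}"

context FT begin

abbreviation "B a b \<equiv> bdries C f m a b"
abbreviation "Z a b \<equiv> cycles C f m a b"
abbreviation "hc a b \<equiv> hcls C f m a b"

lemma B_zero: "0 \<in> B a b"
  using bdries_iff[of 0 a b] CM_zero by (metis D_zero pm_zero)

lemma B_add: assumes "x \<in> B a b" "y \<in> B a b" shows "x + y \<in> B a b"
proof -
  obtain u v where u: "u \<in> CM a b" "x = pm a (D u)" and v: "v \<in> CM a b" "y = pm a (D v)"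
    using assms by (auto simp: bdries_iff)
  have "x + y = pm a (D (u + v))" using u v D_add[OF CM_NB[OF u(1)] CM_NB[OF v(1)]] by (simp add: pm_add)
  then show ?thesis using CM_add[OF u(1) v(1)] by (auto simp: bdries_iff)
qed

lemma B_smul: assumes "x \<in> B a b" shows "(\<lambda>c. k * x c) \<in> B a b"
proof -
  obtain u where u: "u \<in> CM a b" "x = pm a (D u)" using assms by (auto simp: bdries_iff)
  have "(\<lambda>c. k * x c) = pm a (D (\<lambda>c. k * u c))" using u D_smul[OF CM_NB[OF u(1)]] by (simp add: pm_smul)
  then show ?thesis using CM_smul[OF u(1)] by (auto simp: bdries_iff)
qed

lemma B_uminus: assumes "x \<in> B a b" shows "- x \<in> B a b"
proof -
  have "- x = (\<lambda>c. (-1) * x c)" by (simp add: fun_eq_iff)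
  then show ?thesis using B_smul[OF assms, of "-1"] by simp
qed

lemma B_diff: "x \<in> B a b \<Longrightarrow> y \<in> B a b \<Longrightarrow> x - y \<in> B a b"
  using B_add[OF _ B_uminus] by (metis diff_conv_add_uminus)

lemma B_sum: "finite I \<Longrightarrow> (\<And>i. i \<in> I \<Longrightarrow> g i \<in> B a b) \<Longrightarrow> (\<Sum>i\<in>I. g i) \<in> B a b"
  by (induction I rule: finite_induct) (auto intro: B_add B_zero)

lemma B_mono: "x \<in> B a b \<Longrightarrow> b \<le> b' \<Longrightarrow> x \<in> B a b'"
  by (auto simp: bdries_iff intro: CM_mono)

lemma B_pm: assumes "x \<in> B a b" "a \<le> a'" shows "pm a' x \<in> B a' b"
proof -
  obtain u where u: "u \<in> CM a b" "x = pm a (D u)" using assms by (auto simp: bdries_iff)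
  have "pm a' x = pm a' (D u)" using u assms(2) by (simp add: pm_pm)
  also have "\<dots> = pm a' (D (pm a' u))" using D_pm[OF CM_NB[OF u(1)]] by simp
  finally show ?thesis using pm_CM2[OF u(1)] by (auto simp: bdries_iff)
qed

lemma Z_add: "x \<in> Z a b \<Longrightarrow> y \<in> Z a b \<Longrightarrow> x + y \<in> Z a b"
  by (auto simp: cycles_iff CM_add D_add[OF CM_NB CM_NB] pm_add)
lemma Z_smul: "x \<in> Z a b \<Longrightarrow> (\<lambda>c. k * x c) \<in> Z a b"
  by (auto simp: cycles_iff CM_smul D_smul[OF CM_NB] pm_smul fun_eq_iff)
lemma Z_uminus: "x \<in> Z a b \<Longrightarrow> - x \<in> Z a b"
  by (auto simp: cycles_iff CM_uminus D_uminus[OF CM_NB] pm_uminus)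
lemma Z_diff: "x \<in> Z a b \<Longrightarrow> y \<in> Z a b \<Longrightarrow> x - y \<in> Z a b"
  using Z_add[OF _ Z_uminus] by (metis diff_conv_add_uminus)
lemma Z_zero: "0 \<in> Z a b"
  by (auto simp: cycles_iff)
lemma Z_mono: "x \<in> Z a b \<Longrightarrow> b \<le> b' \<Longrightarrow> x \<in> Z a b'"
  by (auto simp: cycles_iff intro: CM_mono)
lemma Z_pm: assumes "x \<in> Z a b" "a \<le> a'" shows "pm a' x \<in> Z a' b"
proof -
  have "pm a' (D (pm a' x)) = pm a' (D x)" using D_pm[OF CM_NB] assms by (auto simp: cycles_iff)
  also have "\<dots> = pm a' (pm a (D x))" using assms(2) by (simp add: pm_pm)
  also have "\<dots> = 0" using assms by (simp add: cycles_iff)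
  finally show ?thesis using assms pm_CM2 by (auto simp: cycles_iff)
qed

lemma hc_self: "z \<in> hc a b z"
  unfolding hcls_def using B_zero by force

lemma hc_eq: "hc a b z = hc a b z' \<longleftrightarrow> z - z' \<in> B a b"
proof
  assume "hc a b z = hc a b z'"
  then have "z \<in> hc a b z'" using hc_self[of z a b] by simp
  then obtain w where "w \<in> B a b" "z = z' + w" unfolding hcls_def by auto
  then show "z - z' \<in> B a b" by simp
next
  assume h: "z - z' \<in> B a b"
  show "hc a b z = hc a b z'"
  proof (intro equalityI subsetI)
    fix x assume "x \<in> hc a b z"
    then obtain w where w: "w \<in> B a b" "x = z + w" unfolding hcls_def by auto
    then have "x = z' + ((z - z') + w)" by simp
    then show "x \<in> hc a b z'" unfolding hcls_def using B_add[OF h w(1)] by blast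
  next
    fix x assume "x \<in> hc a b z'"
    then obtain w where w: "w \<in> B a b" "x = z' + w" unfolding hcls_def by auto
    then have "x = z + (w - (z - z'))" by simp
    then show "x \<in> hc a b z" unfolding hcls_def using B_diff[OF w(1) h] by blast
  qed
qed

lemma HM_carr: "vcarr (HMv C f m a b) = hc a b ` Z a b"
proof -
  have "vcarr (HMv C f m a b) = (\<lambda>x. {(\<lambda>c. x c + w c) | w. w \<in> B a b}) ` (CM a b \<inter> Z a b)"
    by (simp add: HMv_def quotv_def subv_def CMv_def)
  also have "\<dots> = hc a b ` Z a b"
    by (auto simp: hcls_def plus_fun_def cycles_iff image_def)
  finally show ?thesis .
qed

lemma HM_zero: "vzero (HMv C f m a b) = hc a b 0"
  by (simp add: HMv_def quotv_def subv_def CMv_def hcls_def plus_fun_def)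

lemma HM_add: "vadd (HMv C f m a b) (hc a b z) (hc a b z') = hc a b (z + z')"
proof -
  have "vadd (HMv C f m a b) (hc a b z) (hc a b z') = {(\<lambda>c. x c + y c) | x y. x \<in> hc a b z \<and> y \<in> hc a b z'}"
    by (simp add: HMv_def quotv_def subv_def CMv_def)
  also have "\<dots> = hc a b (z + z')"
  proof (intro equalityI subsetI)
    fix u assume "u \<in> {(\<lambda>c. x c + y c) | x y. x \<in> hc a b z \<and> y \<in> hc a b z'}"
    then obtain w w' where "w \<in> B a b" "w' \<in> B a b" "u = (z + w) + (z' + w')"
      unfolding hcls_def plus_fun_def by auto
    then have "u = (z + z') + (w + w')" by (simp add: algebra_simps)
    then show "u \<in> hc a b (z + z')" unfolding hcls_def using B_add[OF \<open>w \<in> B a b\<close> \<open>w' \<in> B a b\<close>] by blast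
  next
    fix u assume "u \<in> hc a b (z + z')"
    then obtain w where "w \<in> B a b" "u = (z + z') + w" unfolding hcls_def by auto
    then have "u = (\<lambda>c. (z + w) c + z' c)" by (auto simp: fun_eq_iff algebra_simps)
    moreover have "z + w \<in> hc a b z" using \<open>w \<in> B a b\<close> unfolding hcls_def by auto
    ultimately show "u \<in> {(\<lambda>c. x c + y c) | x y. x \<in> hc a b z \<and> y \<in> hc a b z'}"
      using hc_self by blast
  qed
  finally show ?thesis .
qed

lemma HM_smul: "vsmul (HMv C f m a b) k (hc a b z) = hc a b (\<lambda>c. k * z c)"
proof -
  have "vsmul (HMv C f m a b) k (hc a b z) = {(\<lambda>c. k * x c + w c) | x w. x \<in> hc a b z \<and> w \<in> B a b}"
    by (simp add: HMv_def quotv_def subv_def CMv_def)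
  also have "\<dots> = hc a b (\<lambda>c. k * z c)"
  proof (intro equalityI subsetI)
    fix u assume "u \<in> {(\<lambda>c. k * x c + w c) | x w. x \<in> hc a b z \<and> w \<in> B a b}"
    then obtain w w' where "w \<in> B a b" "w' \<in> B a b" "u = (\<lambda>c. k * (z + w) c + w' c)"
      unfolding hcls_def by auto
    then have "u = (\<lambda>c. k * z c) + ((\<lambda>c. k * w c) + w')" by (auto simp: fun_eq_iff algebra_simps)
    then show "u \<in> hc a b (\<lambda>c. k * z c)" unfolding hcls_def
      using B_add[OF B_smul[OF \<open>w \<in> B a b\<close>] \<open>w' \<in> B a b\<close>] by blast
  next
    fix u assume "u \<in> hc a b (\<lambda>c. k * z c)"
    then obtain w where "w \<in> B a b" "u = (\<lambda>c. k * z c) + w" unfolding hcls_def by auto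
    then have "u = (\<lambda>c. k * z c + w c)" by auto
    then show "u \<in> {(\<lambda>c. k * x c + w c) | x w. x \<in> hc a b z \<and> w \<in> B a b}"
      using hc_self \<open>w \<in> B a b\<close> by blast
  qed
  finally show ?thesis .
qed

lemma Hi_hc: assumes "b1 \<le> b2" shows "Hi C f m a b2 b1 (hc a b1 z) = hc a b2 z"
proof -
  have "Hi C f m a b2 b1 (hc a b1 z) = {(\<lambda>c. x c + w c) | x w. x \<in> hc a b1 z \<and> w \<in> B a b2}"
    by (simp add: Hi_def qmap_def CMv_def)
  also have "\<dots> = hc a b2 z"
  proof (intro equalityI subsetI)
    fix u assume "u \<in> {(\<lambda>c. x c + w c) | x w. x \<in> hc a b1 z \<and> w \<in> B a b2}"
    then obtain w w' where "w \<in> B a b1" "w' \<in> B a b2" "u = (z + w) + w'"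
      unfolding hcls_def plus_fun_def by auto
    then have "u = z + (w + w')" by (simp add: algebra_simps)
    then show "u \<in> hc a b2 z" unfolding hcls_def using B_add[OF B_mono[OF \<open>w \<in> B a b1\<close> assms] \<open>w' \<in> B a b2\<close>] by blast
  next
    fix u assume "u \<in> hc a b2 z"
    then obtain w where "w \<in> B a b2" "u = z + w" unfolding hcls_def by auto
    then show "u \<in> {(\<lambda>c. x c + w c) | x w. x \<in> hc a b1 z \<and> w \<in> B a b2}"
      using hc_self unfolding plus_fun_def by blast
  qed
  finally show ?thesis .
qed

lemma Hp_hc: assumes "a1 \<le> a2" shows "Hp C f m b a2 a1 (hc a1 b z) = hc a2 b (pm a2 z)"
proof -
  have "Hp C f m b a2 a1 (hc a1 b z) = {(\<lambda>c. pm a2 x c + w c) | x w. x \<in> hc a1 b z \<and> w \<in> B a2 b}"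
    by (simp add: Hp_def qmap_def CMv_def)
  also have "\<dots> = hc a2 b (pm a2 z)"
  proof (intro equalityI subsetI)
    fix u assume "u \<in> {(\<lambda>c. pm a2 x c + w c) | x w. x \<in> hc a1 b z \<and> w \<in> B a2 b}"
    then obtain w w' where "w \<in> B a1 b" "w' \<in> B a2 b" "u = pm a2 (z + w) + w'"
      unfolding hcls_def plus_fun_def by auto
    then have "u = pm a2 z + (pm a2 w + w')" by (simp add: pm_add add.assoc)
    then show "u \<in> hc a2 b (pm a2 z)" unfolding hcls_def
      using B_add[OF B_pm[OF \<open>w \<in> B a1 b\<close> assms] \<open>w' \<in> B a2 b\<close>] by blast
  next
    fix u assume "u \<in> hc a2 b (pm a2 z)"
    then obtain w where "w \<in> B a2 b" "u = pm a2 z + w" unfolding hcls_def by auto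
    then show "u \<in> {(\<lambda>c. pm a2 x c + w c) | x w. x \<in> hc a1 b z \<and> w \<in> B a2 b}"
      using hc_self unfolding plus_fun_def by blast
  qed
  finally show ?thesis .
qed

end



locale dsys =
  fixes G :: "real \<Rightarrow> ('a, 'k) vs" and \<iota> :: "real \<Rightarrow> real \<Rightarrow> 'a \<Rightarrow> 'a"
  assumes i_carr: "b \<le> e \<Longrightarrow> x \<in> vcarr (G b) \<Longrightarrow> \<iota> e b x \<in> vcarr (G e)"
  and i_id: "x \<in> vcarr (G b) \<Longrightarrow> \<iota> b b x = x"
  and i_comp: "b \<le> d \<Longrightarrow> d \<le> e \<Longrightarrow> x \<in> vcarr (G b) \<Longrightarrow> \<iota> e d (\<iota> d b x) = \<iota> e b x"
  and add_carr: "x \<in> vcarr (G b) \<Longrightarrow> y \<in> vcarr (G b) \<Longrightarrow> vadd (G b) x y \<in> vcarr (G b)"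
  and smul_carr: "x \<in> vcarr (G b) \<Longrightarrow> vsmul (G b) k x \<in> vcarr (G b)"
  and zero_carr: "vzero (G b) \<in> vcarr (G b)"
  and i_add: "b \<le> e \<Longrightarrow> x \<in> vcarr (G b) \<Longrightarrow> y \<in> vcarr (G b) \<Longrightarrow>
      \<iota> e b (vadd (G b) x y) = vadd (G e) (\<iota> e b x) (\<iota> e b y)"
  and i_smul: "b \<le> e \<Longrightarrow> x \<in> vcarr (G b) \<Longrightarrow> \<iota> e b (vsmul (G b) k x) = vsmul (G e) k (\<iota> e b x)"
  and i_zero: "b \<le> e \<Longrightarrow> \<iota> e b (vzero (G b)) = vzero (G e)"
begin

abbreviation "dc \<equiv> dircls G \<iota>"

lemma dc_self: "x \<in> vcarr (G b) \<Longrightarrow> (b, x) \<in> dc b x"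
  unfolding dircls_def by auto

lemma push: assumes "e \<le> e'" "d \<le> e" "b \<le> e" "v \<in> vcarr (G d)" "x \<in> vcarr (G b)" "\<iota> e d v = \<iota> e b x"
  shows "\<iota> e' d v = \<iota> e' b x"
  using i_comp[OF assms(2,1,4)] i_comp[OF assms(3,1,5)] assms(6) by metis

lemma rel_trans:
  assumes x: "x \<in> vcarr (G b)" and v: "v \<in> vcarr (G d)" and u: "u \<in> vcarr (G d')"
    and e1: "b \<le> e1" "d \<le> e1" "\<iota> e1 d v = \<iota> e1 b x"
    and e2: "d \<le> e2" "d' \<le> e2" "\<iota> e2 d' u = \<iota> e2 d v"
  shows "\<exists>e. b \<le> e \<and> d' \<le> e \<and> \<iota> e d' u = \<iota> e b x"
proof -
  let ?e = "max e1 e2"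
  have "\<iota> ?e d v = \<iota> ?e b x" using push[OF _ e1(2,1) v x e1(3)] by simp
  moreover have "\<iota> ?e d' u = \<iota> ?e d v" using push[OF _ e2(2,1) u v e2(3)] by simp
  ultimately show ?thesis using e1 e2 by (intro exI[of _ ?e]) auto
qed

lemma dc_mem_eq: assumes x: "x \<in> vcarr (G b)" and mem: "(d, v) \<in> dc b x"
  shows "dc d v = dc b x"
proof -
  from mem obtain e where v: "v \<in> vcarr (G d)" and e: "b \<le> e" "d \<le> e" "\<iota> e d v = \<iota> e b x"
    unfolding dircls_def by auto
  show ?thesis
  proof (intro equalityI subsetI)
    fix q assume "q \<in> dc d v"
    then obtain d' u e' where q: "q = (d', u)" "u \<in> vcarr (G d')" "d \<le> e'" "d' \<le> e'" "\<iota> e' d' u = \<iota> e' d v"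
      unfolding dircls_def by auto
    from rel_trans[OF x v q(2) e q(3-5)] show "q \<in> dc b x" using q unfolding dircls_def by auto
  next
    fix q assume "q \<in> dc b x"
    then obtain d' u e' where q: "q = (d', u)" "u \<in> vcarr (G d')" "b \<le> e'" "d' \<le> e'" "\<iota> e' d' u = \<iota> e' b x"
      unfolding dircls_def by auto
    have e_sym: "d \<le> e" "b \<le> e" "\<iota> e b x = \<iota> e d v" using e by auto
    from rel_trans[OF v x q(2) e_sym q(3-5)] show "q \<in> dc d v" using q unfolding dircls_def by auto
  qed
qed

lemma dc_eq_iff: assumes x: "x \<in> vcarr (G b)" and y: "y \<in> vcarr (G b')"
  shows "dc b' y = dc b x \<longleftrightarrow> (\<exists>e. b \<le> e \<and> b' \<le> e \<and> \<iota> e b' y = \<iota> e b x)"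
proof
  assume "dc b' y = dc b x"
  then have "(b', y) \<in> dc b x" using dc_self[OF y] by simp
  then show "\<exists>e. b \<le> e \<and> b' \<le> e \<and> \<iota> e b' y = \<iota> e b x" unfolding dircls_def by auto
next
  assume "\<exists>e. b \<le> e \<and> b' \<le> e \<and> \<iota> e b' y = \<iota> e b x"
  then have "(b', y) \<in> dc b x" using y unfolding dircls_def by auto
  then show "dc b' y = dc b x" by (rule dc_mem_eq[OF x])
qed

lemma dc_push: assumes x: "x \<in> vcarr (G b)" and "b \<le> e" shows "dc e (\<iota> e b x) = dc b x"
  using dc_eq_iff[OF x i_carr[OF assms(2) x]] assms i_comp[OF assms(2) order_refl x] by auto

lemma carr_dl: "vcarr (dirlimv G \<iota>) = {dc b x | b x. x \<in> vcarr (G b)}"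
  by (simp add: dirlimv_def)

lemma union_const: "S \<noteq> {} \<Longrightarrow> (\<And>X. X \<in> S \<Longrightarrow> X = A) \<Longrightarrow> \<Union>S = A"
  by auto

lemma add_dl: assumes x: "x \<in> vcarr (G b)" and y: "y \<in> vcarr (G b')" and e: "b \<le> e" "b' \<le> e"
  shows "vadd (dirlimv G \<iota>) (dc b x) (dc b' y) = dc e (vadd (G e) (\<iota> e b x) (\<iota> e b' y))"
proof -
  have "vadd (dirlimv G \<iota>) (dc b x) (dc b' y) = \<Union>{dc e1 (vadd (G e1) (\<iota> e1 b1 x1) (\<iota> e1 b2 y1)) | e1 b1 x1 b2 y1.
        (b1, x1) \<in> dc b x \<and> (b2, y1) \<in> dc b' y \<and> b1 \<le> e1 \<and> b2 \<le> e1}"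
    by (simp add: dirlimv_def)
  also have "\<dots> = dc e (vadd (G e) (\<iota> e b x) (\<iota> e b' y))"
  proof (rule union_const)
    show "{dc e1 (vadd (G e1) (\<iota> e1 b1 x1) (\<iota> e1 b2 y1)) | e1 b1 x1 b2 y1.
        (b1, x1) \<in> dc b x \<and> (b2, y1) \<in> dc b' y \<and> b1 \<le> e1 \<and> b2 \<le> e1} \<noteq> {}"
      using dc_self[OF x] dc_self[OF y] e by blast
  next
    fix X assume "X \<in> {dc e1 (vadd (G e1) (\<iota> e1 b1 x1) (\<iota> e1 b2 y1)) | e1 b1 x1 b2 y1.
        (b1, x1) \<in> dc b x \<and> (b2, y1) \<in> dc b' y \<and> b1 \<le> e1 \<and> b2 \<le> e1}"
    then obtain e1 b1 x1 b2 y1 where X: "X = dc e1 (vadd (G e1) (\<iota> e1 b1 x1) (\<iota> e1 b2 y1))"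
      and m1: "(b1, x1) \<in> dc b x" and m2: "(b2, y1) \<in> dc b' y" and le: "b1 \<le> e1" "b2 \<le> e1" by blast
    from m1 obtain f1 where x1: "x1 \<in> vcarr (G b1)" and f1: "b \<le> f1" "b1 \<le> f1" "\<iota> f1 b1 x1 = \<iota> f1 b x"
      unfolding dircls_def by auto
    from m2 obtain f2 where y1: "y1 \<in> vcarr (G b2)" and f2: "b' \<le> f2" "b2 \<le> f2" "\<iota> f2 b2 y1 = \<iota> f2 b' y"
      unfolding dircls_def by auto
    define E where "E = max (max e e1) (max f1 f2)"
    have E: "e \<le> E" "e1 \<le> E" "f1 \<le> E" "f2 \<le> E" unfolding E_def by auto
    have hx: "\<iota> E b1 x1 = \<iota> E b x" by (rule push[OF E(3) f1(2,1) x1 x f1(3)])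
    have hy: "\<iota> E b2 y1 = \<iota> E b' y" by (rule push[OF E(4) f2(2,1) y1 y f2(3)])
    have c1: "\<iota> e1 b1 x1 \<in> vcarr (G e1)" "\<iota> e1 b2 y1 \<in> vcarr (G e1)" using i_carr le x1 y1 by auto
    have c2: "\<iota> e b x \<in> vcarr (G e)" "\<iota> e b' y \<in> vcarr (G e)" using i_carr e x y by auto
    have "\<iota> E e1 (vadd (G e1) (\<iota> e1 b1 x1) (\<iota> e1 b2 y1)) = vadd (G E) (\<iota> E b1 x1) (\<iota> E b2 y1)"
      using i_add[OF E(2) c1] i_comp[OF le(1) E(2) x1] i_comp[OF le(2) E(2) y1] by simp
    moreover have "\<iota> E e (vadd (G e) (\<iota> e b x) (\<iota> e b' y)) = vadd (G E) (\<iota> E b x) (\<iota> E b' y)"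
      using i_add[OF E(1) c2] i_comp[OF e(1) E(1) x] i_comp[OF e(2) E(1) y] by simp
    ultimately have "\<iota> E e1 (vadd (G e1) (\<iota> e1 b1 x1) (\<iota> e1 b2 y1)) = \<iota> E e (vadd (G e) (\<iota> e b x) (\<iota> e b' y))"
      using hx hy by simp
    then show "X = dc e (vadd (G e) (\<iota> e b x) (\<iota> e b' y))"
      unfolding X using dc_eq_iff[OF add_carr[OF c2] add_carr[OF c1]] E by blast
  qed
  finally show ?thesis .
qed

lemma smul_dl: assumes x: "x \<in> vcarr (G b)"
  shows "vsmul (dirlimv G \<iota>) k (dc b x) = dc b (vsmul (G b) k x)"
proof -
  have "vsmul (dirlimv G \<iota>) k (dc b x) = \<Union>{dc b1 (vsmul (G b1) k x1) | b1 x1. (b1, x1) \<in> dc b x}"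
    by (simp add: dirlimv_def)
  also have "\<dots> = dc b (vsmul (G b) k x)"
  proof (rule union_const)
    show "{dc b1 (vsmul (G b1) k x1) | b1 x1. (b1, x1) \<in> dc b x} \<noteq> {}" using dc_self[OF x] by blast
  next
    fix X assume "X \<in> {dc b1 (vsmul (G b1) k x1) | b1 x1. (b1, x1) \<in> dc b x}"
    then obtain b1 x1 where X: "X = dc b1 (vsmul (G b1) k x1)" and m: "(b1, x1) \<in> dc b x" by blast
    from m obtain e where x1: "x1 \<in> vcarr (G b1)" and e: "b \<le> e" "b1 \<le> e" "\<iota> e b1 x1 = \<iota> e b x"
      unfolding dircls_def by auto
    have "\<iota> e b1 (vsmul (G b1) k x1) = \<iota> e b (vsmul (G b) k x)"
      using i_smul[OF e(2) x1] i_smul[OF e(1) x] e(3) by simp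
    then show "X = dc b (vsmul (G b) k x)" unfolding X
      using dc_eq_iff[OF smul_carr[OF x] smul_carr[OF x1]] e by blast
  qed
  finally show ?thesis .
qed

lemma zero_dl: "vzero (dirlimv G \<iota>) = dc b (vzero (G b))"
proof -
  have "vzero (dirlimv G \<iota>) = \<Union>{dc b1 (vzero (G b1)) | b1. True}"
    by (simp add: dirlimv_def full_SetCompr_eq)
  also have "\<dots> = dc b (vzero (G b))"
  proof (rule union_const)
    fix X assume "X \<in> {dc b1 (vzero (G b1)) | b1. True}"
    then obtain b1 where X: "X = dc b1 (vzero (G b1))" by blast
    have "\<iota> (max b b1) b1 (vzero (G b1)) = \<iota> (max b b1) b (vzero (G b))" using i_zero by simp
    then show "X = dc b (vzero (G b))" unfolding X
      using dc_eq_iff[OF zero_carr zero_carr] by (metis max.cobounded1 max.cobounded2)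
  qed auto
  finally show ?thesis .
qed

end

lemma dirmap_dc:
  assumes S1: "dsys G \<iota>" and S2: "dsys G' \<iota>'"
    and psi_carr: "\<And>b x. x \<in> vcarr (G b) \<Longrightarrow> \<psi> b x \<in> vcarr (G' b)"
    and psi_comm: "\<And>b e x. b \<le> e \<Longrightarrow> x \<in> vcarr (G b) \<Longrightarrow> \<psi> e (\<iota> e b x) = \<iota>' e b (\<psi> b x)"
    and x: "x \<in> vcarr (G b)"
  shows "dirmap G' \<iota>' \<psi> (dircls G \<iota> b x) = dircls G' \<iota>' b (\<psi> b x)"
proof -
  interpret S1: dsys G \<iota> by (rule S1)
  interpret S2: dsys G' \<iota>' by (rule S2)
  have "dirmap G' \<iota>' \<psi> (dircls G \<iota> b x) = \<Union>{dircls G' \<iota>' b1 (\<psi> b1 x1) | b1 x1. (b1, x1) \<in> dircls G \<iota> b x}"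
    by (simp add: dirmap_def)
  also have "\<dots> = dircls G' \<iota>' b (\<psi> b x)"
  proof (rule S1.union_const)
    show "{dircls G' \<iota>' b1 (\<psi> b1 x1) | b1 x1. (b1, x1) \<in> dircls G \<iota> b x} \<noteq> {}" using S1.dc_self[OF x] by blast
  next
    fix X assume "X \<in> {dircls G' \<iota>' b1 (\<psi> b1 x1) | b1 x1. (b1, x1) \<in> dircls G \<iota> b x}"
    then obtain b1 x1 where X: "X = dircls G' \<iota>' b1 (\<psi> b1 x1)" and m: "(b1, x1) \<in> dircls G \<iota> b x" by blast
    from m obtain e where x1: "x1 \<in> vcarr (G b1)" and e: "b \<le> e" "b1 \<le> e" "\<iota> e b1 x1 = \<iota> e b x"
      unfolding dircls_def by auto
    have "\<iota>' e b1 (\<psi> b1 x1) = \<iota>' e b (\<psi> b x)"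
      using psi_comm[OF e(2) x1] psi_comm[OF e(1) x] e(3) by simp
    then show "X = dircls G' \<iota>' b (\<psi> b x)" unfolding X
      using S2.dc_eq_iff[OF psi_carr[OF x] psi_carr[OF x1]] e by blast
  qed
  finally show ?thesis .
qed




context FT begin

abbreviation "HM a b \<equiv> HMv C f m a b"

lemma HM_elem: "X \<in> vcarr (HM a b) \<Longrightarrow> \<exists>z\<in>Z a b. X = hc a b z"
  using HM_carr by auto

lemma hc_carr: "z \<in> Z a b \<Longrightarrow> hc a b z \<in> vcarr (HM a b)"
  using HM_carr by auto

lemma dsys_HM: "dsys (\<lambda>b. HM a b) (Hi C f m a)"
proof
  fix b e x assume "b \<le> e" "x \<in> vcarr (HM a b)"
  then obtain z where "z \<in> Z a b" "x = hc a b z" using HM_elem by blast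
  then show "Hi C f m a e b x \<in> vcarr (HM a e)"
    using Hi_hc[OF \<open>b \<le> e\<close>] hc_carr Z_mono[OF _ \<open>b \<le> e\<close>] by simp
next
  fix b x assume "x \<in> vcarr (HM a b)"
  then obtain z where "z \<in> Z a b" "x = hc a b z" using HM_elem by blast
  then show "Hi C f m a b b x = x" using Hi_hc[of b b] by simp
next
  fix b d e x assume "b \<le> d" "d \<le> e" "x \<in> vcarr (HM a b)"
  moreover obtain z where "z \<in> Z a b" "x = hc a b z" using HM_elem \<open>x \<in> _\<close> by blast
  ultimately show "Hi C f m a e d (Hi C f m a d b x) = Hi C f m a e b x"
    using Hi_hc[of b d] Hi_hc[of d e] Hi_hc[of b e] by simp
next
  fix b x y assume "x \<in> vcarr (HM a b)" "y \<in> vcarr (HM a b)"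
  moreover obtain z where "z \<in> Z a b" "x = hc a b z" using HM_elem \<open>x \<in> _\<close> by blast
  moreover obtain z' where "z' \<in> Z a b" "y = hc a b z'" using HM_elem \<open>y \<in> _\<close> by blast
  ultimately show "vadd (HM a b) x y \<in> vcarr (HM a b)" using HM_add hc_carr Z_add by simp
next
  fix b x k assume "x \<in> vcarr (HM a b)"
  moreover obtain z where "z \<in> Z a b" "x = hc a b z" using HM_elem \<open>x \<in> _\<close> by blast
  ultimately show "vsmul (HM a b) k x \<in> vcarr (HM a b)" using HM_smul hc_carr Z_smul by simp
next
  fix b show "vzero (HM a b) \<in> vcarr (HM a b)" using HM_zero hc_carr Z_zero by simp
next
  fix b e x y assume "b \<le> e" "x \<in> vcarr (HM a b)" "y \<in> vcarr (HM a b)"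
  moreover obtain z where "z \<in> Z a b" "x = hc a b z" using HM_elem \<open>x \<in> _\<close> by blast
  moreover obtain z' where "z' \<in> Z a b" "y = hc a b z'" using HM_elem \<open>y \<in> _\<close> by blast
  ultimately show "Hi C f m a e b (vadd (HM a b) x y) = vadd (HM a e) (Hi C f m a e b x) (Hi C f m a e b y)"
    using HM_add Hi_hc by simp
next
  fix b e x k assume "b \<le> e" "x \<in> vcarr (HM a b)"
  moreover obtain z where "z \<in> Z a b" "x = hc a b z" using HM_elem \<open>x \<in> _\<close> by blast
  ultimately show "Hi C f m a e b (vsmul (HM a b) k x) = vsmul (HM a e) k (Hi C f m a e b x)"
    using HM_smul Hi_hc by simp
next
  fix b e :: real assume "b \<le> e"
  then show "Hi C f m a e b (vzero (HM a b)) = vzero (HM a e)" using HM_zero Hi_hc by simp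
qed

lemma Hp_carr: assumes "a1 \<le> a2" "X \<in> vcarr (HM a1 b)" shows "Hp C f m b a2 a1 X \<in> vcarr (HM a2 b)"
proof -
  obtain z where "z \<in> Z a1 b" "X = hc a1 b z" using HM_elem assms(2) by blast
  then show ?thesis using Hp_hc[OF assms(1)] hc_carr Z_pm[OF _ assms(1)] by simp
qed

lemma Hp_Hi: "a1 \<le> a2 \<Longrightarrow> b \<le> e \<Longrightarrow> X \<in> vcarr (HM a1 b) \<Longrightarrow>
   Hp C f m e a2 a1 (Hi C f m a1 e b X) = Hi C f m a2 e b (Hp C f m b a2 a1 X)"
  using HM_elem[of X a1 b] Hp_hc Hi_hc by auto

lemma Hp_add: "a1 \<le> a2 \<Longrightarrow> X \<in> vcarr (HM a1 b) \<Longrightarrow> Y \<in> vcarr (HM a1 b) \<Longrightarrow>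
   Hp C f m b a2 a1 (vadd (HM a1 b) X Y) = vadd (HM a2 b) (Hp C f m b a2 a1 X) (Hp C f m b a2 a1 Y)"
  using HM_elem[of X a1 b] HM_elem[of Y a1 b] Hp_hc HM_add pm_add by auto

lemma Hp_smul: "a1 \<le> a2 \<Longrightarrow> X \<in> vcarr (HM a1 b) \<Longrightarrow>
   Hp C f m b a2 a1 (vsmul (HM a1 b) k X) = vsmul (HM a2 b) k (Hp C f m b a2 a1 X)"
  using HM_elem[of X a1 b] Hp_hc HM_smul pm_smul by auto

lemma Hp_zero: "a1 \<le> a2 \<Longrightarrow> Hp C f m b a2 a1 (vzero (HM a1 b)) = vzero (HM a2 b)"
  using Hp_hc HM_zero pm_zero by simp

abbreviation "LS \<equiv> Lsys C f m"
abbreviation "iL \<equiv> iotaL C f m"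

lemma LS_carr: "x \<in> vcarr (LS b) \<longleftrightarrow> (\<forall>a. x a \<in> vcarr (HM a b)) \<and> (\<forall>a1 a2. a1 \<le> a2 \<longrightarrow> Hp C f m b a2 a1 (x a1) = x a2)"
  by (simp add: Lsys_def invlimv_def subv_def prodv_def)

lemma LS_add: "vadd (LS b) x y = (\<lambda>a. vadd (HM a b) (x a) (y a))"
  by (simp add: Lsys_def invlimv_def subv_def prodv_def)
lemma LS_smul: "vsmul (LS b) k x = (\<lambda>a. vsmul (HM a b) k (x a))"
  by (simp add: Lsys_def invlimv_def subv_def prodv_def)
lemma LS_zero: "vzero (LS b) = (\<lambda>a. vzero (HM a b))"
  by (simp add: Lsys_def invlimv_def subv_def prodv_def)

lemma dsys_LS: "dsys LS iL"
proof -
  interpret H: dsys "\<lambda>b. HM a b" "Hi C f m a" for a by (rule dsys_HM)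
  show ?thesis
  proof
    fix b e x assume be: "b \<le> e" and x: "x \<in> vcarr (LS b)"
    show "iL e b x \<in> vcarr (LS e)"
      unfolding LS_carr iotaL_def
    proof (intro conjI allI impI)
      fix a show "Hi C f m a e b (x a) \<in> vcarr (HM a e)" using x be H.i_carr by (auto simp: LS_carr)
    next
      fix a1 a2 :: real assume "a1 \<le> a2"
      then show "Hp C f m e a2 a1 (Hi C f m a1 e b (x a1)) = Hi C f m a2 e b (x a2)"
        using Hp_Hi[OF _ be] x by (auto simp: LS_carr)
    qed
  next
    fix b x assume "x \<in> vcarr (LS b)" then show "iL b b x = x"
      by (auto simp: iotaL_def LS_carr H.i_id)
  next
    fix b d e x assume "b \<le> d" "d \<le> e" "x \<in> vcarr (LS b)" then show "iL e d (iL d b x) = iL e b x"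
      by (auto simp: iotaL_def LS_carr H.i_comp)
  next
    fix b x y assume "x \<in> vcarr (LS b)" "y \<in> vcarr (LS b)" then show "vadd (LS b) x y \<in> vcarr (LS b)"
      by (auto simp: LS_carr LS_add H.add_carr Hp_add)
  next
    fix b x k assume "x \<in> vcarr (LS b)" then show "vsmul (LS b) k x \<in> vcarr (LS b)"
      by (auto simp: LS_carr LS_smul H.smul_carr Hp_smul)
  next
    fix b show "vzero (LS b) \<in> vcarr (LS b)"
      by (auto simp: LS_carr LS_zero H.zero_carr Hp_zero)
  next
    fix b e x y assume "b \<le> e" "x \<in> vcarr (LS b)" "y \<in> vcarr (LS b)"
    then show "iL e b (vadd (LS b) x y) = vadd (LS e) (iL e b x) (iL e b y)"
      by (auto simp: iotaL_def LS_carr LS_add H.i_add)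
  next
    fix b e x k assume "b \<le> e" "x \<in> vcarr (LS b)"
    then show "iL e b (vsmul (LS b) k x) = vsmul (LS e) k (iL e b x)"
      by (auto simp: iotaL_def LS_carr LS_smul H.i_smul)
  next
    fix b e :: real assume "b \<le> e"
    then show "iL e b (vzero (LS b)) = vzero (LS e)"
      by (auto simp: iotaL_def LS_zero H.i_zero)
  qed
qed

sublocale H: dsys "\<lambda>b. HM a b" "Hi C f m a" for a by (rule dsys_HM)
sublocale L: dsys LS iL by (rule dsys_LS)

definition gcl :: "real \<Rightarrow> real \<Rightarrow> ('c \<Rightarrow> 'k) \<Rightarrow> (real \<times> ('c \<Rightarrow> 'k) set) set" where
  "gcl a b z = dircls (\<lambda>b. HM a b) (Hi C f m a) b (hc a b z)"

abbreviation "GS a \<equiv> Gsys C f m a"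

lemma GS_carr: "vcarr (GS a) = {gcl a b z | b z. z \<in> Z a b}"
  unfolding Gsys_def H.carr_dl gcl_def using HM_elem hc_carr by blast

lemma gcl_carr: "z \<in> Z a b \<Longrightarrow> gcl a b z \<in> vcarr (GS a)"
  unfolding GS_carr by blast

lemma gcl_mono: assumes "z \<in> Z a b" "b \<le> b'" shows "gcl a b' z = gcl a b z"
proof -
  have "hc a b' z = Hi C f m a b' b (hc a b z)" using Hi_hc[OF assms(2)] by simp
  then show ?thesis unfolding gcl_def using H.dc_push[OF hc_carr[OF assms(1)] assms(2)] by simp
qed

lemma gcl_eq: assumes "z \<in> Z a b" "z' \<in> Z a b'"
  shows "gcl a b' z' = gcl a b z \<longleftrightarrow> (\<exists>e. b \<le> e \<and> b' \<le> e \<and> z' - z \<in> B a e)"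
proof -
  have "\<forall>e. b \<le> e \<and> b' \<le> e \<longrightarrow> (Hi C f m a e b' (hc a b' z') = Hi C f m a e b (hc a b z) \<longleftrightarrow> z' - z \<in> B a e)"
    by (simp add: Hi_hc hc_eq)
  then show ?thesis unfolding gcl_def H.dc_eq_iff[OF hc_carr[OF assms(1)] hc_carr[OF assms(2)]] by blast
qed

lemma gcl_add: assumes "z \<in> Z a b" "z' \<in> Z a b'"
  shows "vadd (GS a) (gcl a b z) (gcl a b' z') = gcl a (max b b') (z + z')"
  unfolding gcl_def Gsys_def using H.add_dl[OF hc_carr[OF assms(1)] hc_carr[OF assms(2)], of "max b b'"]
  by (simp add: Hi_hc HM_add)

lemma gcl_smul: assumes "z \<in> Z a b"
  shows "vsmul (GS a) k (gcl a b z) = gcl a b (\<lambda>c. k * z c)"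
  unfolding gcl_def Gsys_def using H.smul_dl[OF hc_carr[OF assms(1)]] by (simp add: HM_smul)

lemma gcl_zero: "vzero (GS a) = gcl a b 0"
  unfolding gcl_def Gsys_def H.zero_dl[of _ b] by (simp add: HM_zero)

lemma piG_gcl: assumes "a1 \<le> a2" "z \<in> Z a1 b"
  shows "piG C f m a2 a1 (gcl a1 b z) = gcl a2 b (pm a2 z)"
proof -
  have "piG C f m a2 a1 (gcl a1 b z) = dircls (\<lambda>b. HM a2 b) (Hi C f m a2) b (Hp C f m b a2 a1 (hc a1 b z))"
    unfolding piG_def gcl_def
    by (rule dirmap_dc[OF dsys_HM dsys_HM]) (simp_all add: Hp_carr[OF assms(1)] Hp_Hi[OF assms(1)] hc_carr[OF assms(2)])
  then show ?thesis by (simp add: Hp_hc[OF assms(1)] gcl_def)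
qed

definition GZ :: "real \<Rightarrow> ('c \<Rightarrow> 'k) set" where
  "GZ b = {z \<in> NN b. D z = 0}"

definition fam :: "real \<Rightarrow> ('c \<Rightarrow> 'k) \<Rightarrow> real \<Rightarrow> ('c \<Rightarrow> 'k) set" where
  "fam b z = (\<lambda>a. hc a b (pm a z))"

definition ocl :: "real \<Rightarrow> ('c \<Rightarrow> 'k) \<Rightarrow> (real \<times> (real \<Rightarrow> ('c \<Rightarrow> 'k) set)) set" where
  "ocl b z = dircls LS iL b (fam b z)"

lemma GZ_pm: assumes "z \<in> GZ b" shows "pm a z \<in> Z a b"
proof -
  have z: "z \<in> NN b" "D z = 0" using assms by (auto simp: GZ_def)
  have "pm a (D (pm a z)) = pm a (D z)" by (rule D_pm[OF z(1)])
  then show ?thesis using z pm_CM[OF z(1)] by (simp add: cycles_iff)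
qed

lemma GZ_mono: "z \<in> GZ b \<Longrightarrow> b \<le> b' \<Longrightarrow> z \<in> GZ b'"
  unfolding GZ_def using NB_mono by blast

lemma fam_carr: assumes "z \<in> GZ b" shows "fam b z \<in> vcarr (LS b)"
  unfolding LS_carr fam_def
  using hc_carr[OF GZ_pm[OF assms]] by (auto simp: Hp_hc pm_pm)

lemma iL_fam: "b \<le> e \<Longrightarrow> iL e b (fam b z) = fam e z"
  by (simp add: iotaL_def fam_def Hi_hc)

lemma ocl_mono: assumes "z \<in> GZ b" "b \<le> b'" shows "ocl b' z = ocl b z"
  unfolding ocl_def using L.dc_push[OF fam_carr[OF assms(1)] assms(2)] iL_fam[OF assms(2)] by simp

lemma ocl_eq: assumes "z \<in> GZ b" "z' \<in> GZ b'"
  shows "ocl b' z' = ocl b z \<longleftrightarrow> (\<exists>e. b \<le> e \<and> b' \<le> e \<and> (\<forall>a. pm a (z' - z) \<in> B a e))"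
proof -
  have "ocl b' z' = ocl b z \<longleftrightarrow> (\<exists>e. b \<le> e \<and> b' \<le> e \<and> fam e z' = fam e z)"
    unfolding ocl_def L.dc_eq_iff[OF fam_carr[OF assms(1)] fam_carr[OF assms(2)]]
    using iL_fam by (intro iff_exI) auto
  also have "\<dots> \<longleftrightarrow> (\<exists>e. b \<le> e \<and> b' \<le> e \<and> (\<forall>a. pm a (z' - z) \<in> B a e))"
    by (simp add: fam_def fun_eq_iff hc_eq pm_diff)
  finally show ?thesis .
qed

lemma fam_add: "vadd (LS b) (fam b z) (fam b z') = fam b (z + z')"
  by (simp add: LS_add fam_def HM_add pm_add)

lemma fam_smul: "vsmul (LS b) k (fam b z) = fam b (\<lambda>c. k * z c)"
  by (simp add: LS_smul fam_def HM_smul pm_smul)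

abbreviation "OH \<equiv> overHM C f m"

lemma ocl_add: assumes "z \<in> GZ b" "z' \<in> GZ b"
  shows "vadd OH (ocl b z) (ocl b z') = ocl b (z + z')"
  unfolding ocl_def overHM_def using L.add_dl[OF fam_carr[OF assms(1)] fam_carr[OF assms(2)] order_refl order_refl]
    L.i_id fam_carr assms by (simp add: fam_add)

lemma ocl_smul: assumes "z \<in> GZ b"
  shows "vsmul OH k (ocl b z) = ocl b (\<lambda>c. k * z c)"
  unfolding ocl_def overHM_def using L.smul_dl[OF fam_carr[OF assms(1)]] by (simp add: fam_smul)

lemma ocl_carr: "z \<in> GZ b \<Longrightarrow> ocl b z \<in> vcarr OH"
  unfolding ocl_def overHM_def L.carr_dl using fam_carr by blast

lemma OH_carr: "vcarr OH = {dircls LS iL b x | b x. x \<in> vcarr (LS b)}"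
  unfolding overHM_def L.carr_dl by simp

lemma kappa_dc: assumes "x \<in> vcarr (LS b)"
  shows "kappa C f m (dircls LS iL b x) = (\<lambda>a. dircls (\<lambda>b. HM a b) (Hi C f m a) b (x a))"
proof
  fix a show "kappa C f m (dircls LS iL b x) a = dircls (\<lambda>b. HM a b) (Hi C f m a) b (x a)"
    unfolding kappa_def
    by (rule dirmap_dc[OF dsys_LS dsys_HM, where \<psi>="\<lambda>b x. x a"]) (use assms in \<open>auto simp: LS_carr iotaL_def\<close>)
qed

lemma kappa_ocl: assumes "z \<in> GZ b" shows "kappa C f m (ocl b z) = (\<lambda>a. gcl a b (pm a z))"
  unfolding ocl_def kappa_dc[OF fam_carr[OF assms]] by (simp add: fam_def gcl_def)

lemma UH_zero: "vzero (underHM C f m) = (\<lambda>a. vzero (GS a))"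
  by (simp add: underHM_def invlimv_def subv_def prodv_def)

end



interpretation fv: vector_space "\<lambda>(k::'k::field) (x::'c \<Rightarrow> 'k). (\<lambda>c. k * x c)"
  by unfold_locales (auto simp: fun_eq_iff algebra_simps)

lemma dec_nat_stable:
  fixes d :: "nat \<Rightarrow> nat"
  assumes "\<And>k k'. k \<le> k' \<Longrightarrow> d k' \<le> d k"
  shows "\<exists>K. \<forall>k\<ge>K. d k = d K"
proof -
  obtain K where K: "\<forall>k. d K \<le> d k"
    using ex_has_least_nat[of "\<lambda>_. True" 0 d] by auto
  show ?thesis
  proof (intro exI allI impI)
    fix k assume "K \<le> k"
    then have "d k \<le> d K" using assms by blast
    moreover have "d K \<le> d k" using K by blast
    ultimately show "d k = d K" by simp
  qed
qed

lemma sub_dim_eq: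
  fixes S T :: "('c \<Rightarrow> 'k::field) set"
  assumes S: "fv.subspace S" and T: "fv.subspace T" and ST: "S \<subseteq> T"
    and F: "T \<subseteq> fv.span F" "finite F" and d: "fv.dim T \<le> fv.dim S"
  shows "S = T"
proof (rule ccontr)
  assume "S \<noteq> T"
  then obtain t where t: "t \<in> T" "t \<notin> S" using ST by blast
  obtain BS where BS: "BS \<subseteq> S" "fv.independent BS" "S \<subseteq> fv.span BS" "card BS = fv.dim S"
    using fv.basis_exists by blast
  obtain BT where BT: "BT \<subseteq> T" "fv.independent BT" "T \<subseteq> fv.span BT" "card BT = fv.dim T"
    using fv.basis_exists by blast
  have spBS: "fv.span BS = S" using fv.span_subspace[OF BS(1) BS(3) S] .
  have finBT: "finite BT" using fv.independent_span_bound[OF F(2) BT(2)] BT(1) F(1) by blast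
  have tBS: "t \<notin> fv.span BS" using spBS t by simp
  then have tBS': "t \<notin> BS" using fv.span_base by blast
  have ind: "fv.independent (insert t BS)" using fv.independent_insertI[OF tBS BS(2)] .
  have "insert t BS \<subseteq> fv.span BT" using BT(3) t(1) BS(1) ST fv.span_base by blast
  from fv.independent_span_bound[OF finBT ind this]
  have fin: "finite (insert t BS)" and cd: "card (insert t BS) \<le> card BT" by auto
  have "card (insert t BS) = Suc (card BS)" using fin tBS' by simp
  with cd BS(4) BT(4) d show False by simp
qed

lemma dim_le_sub:
  fixes S T :: "('c \<Rightarrow> 'k::field) set"
  assumes ST: "S \<subseteq> T" and F: "T \<subseteq> fv.span F" "finite F"
  shows "fv.dim S \<le> fv.dim T"
proof -
  obtain BS where BS: "BS \<subseteq> S" "fv.independent BS" "S \<subseteq> fv.span BS" "card BS = fv.dim S"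
    using fv.basis_exists by blast
  obtain BT where BT: "BT \<subseteq> T" "fv.independent BT" "T \<subseteq> fv.span BT" "card BT = fv.dim T"
    using fv.basis_exists by blast
  have finBT: "finite BT" using fv.independent_span_bound[OF F(2) BT(2)] BT(1) F(1) by blast
  have "BS \<subseteq> fv.span BT" using BS(1) ST BT(3) by blast
  from fv.independent_span_bound[OF finBT BS(2) this] show ?thesis using BS(4) BT(4) by simp
qed

definition delta :: "'c \<Rightarrow> 'c \<Rightarrow> 'k::field" where "delta c = (\<lambda>c'. if c' = c then 1 else 0)"

context FT begin

lemma CM_span: "CM a b \<subseteq> fv.span (delta ` Cab C f a b)"
proof
  fix x :: "'c \<Rightarrow> 'k" assume x: "x \<in> CM a b"
  have "x = (\<Sum>c\<in>Cab C f a b. (\<lambda>c'. x c * delta c c'))"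
  proof (rule ext)
    fix c' show "x c' = (\<Sum>c\<in>Cab C f a b. (\<lambda>c'. x c * delta c c')) c'"
    proof (cases "c' \<in> Cab C f a b")
      case True
      have "(\<Sum>c\<in>Cab C f a b. x c * delta c c') = x c' * delta c' c' + (\<Sum>c\<in>Cab C f a b - {c'}. x c * delta c c')"
        by (rule sum.remove[OF fin_Cab True])
      moreover have "(\<Sum>c\<in>Cab C f a b - {c'}. x c * delta c c') = 0" by (rule sum.neutral) (auto simp: delta_def)
      ultimately have "(\<Sum>c\<in>Cab C f a b. x c * delta c c') = x c' * delta c' c'" by simp
      then show ?thesis by (simp add: sum_fun_apply delta_def)
    next
      case False
      then have "x c' = 0" using x by (auto simp: CM_iff Cab_def)
      moreover have "(\<Sum>c\<in>Cab C f a b. x c * delta c c') = 0" using False by (auto simp: delta_def intro!: sum.neutral)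
      ultimately show ?thesis by (simp add: sum_fun_apply)
    qed
  qed
  also have "\<dots> \<in> fv.span (delta ` Cab C f a b)"
    by (intro fv.span_sum fv.span_scale fv.span_base) auto
  finally show "x \<in> fv.span (delta ` Cab C f a b)" .
qed

lemma MLift:
  fixes a :: "nat \<Rightarrow> real" and A W :: "nat \<Rightarrow> ('c \<Rightarrow> 'k) set" and v :: "nat \<Rightarrow> ('c \<Rightarrow> 'k)"
  assumes dec: "\<And>n. a (Suc n) \<le> a n" and unb: "\<And>r. \<exists>n. a n \<le> r"
    and sub: "\<And>n. A n \<subseteq> CM (a n) b"
    and ne: "\<And>n. v n \<in> A n"
    and aff: "\<And>n. A n = (\<lambda>w. v n + w) ` W n"
    and Wsub: "\<And>n. fv.subspace (W n)"
    and WCM: "\<And>n. W n \<subseteq> CM (a n) b"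
    and Ac: "\<And>n. pm (a n) ` A (Suc n) \<subseteq> A n"
    and Wc: "\<And>n. pm (a n) ` W (Suc n) \<subseteq> W n"
  shows "\<exists>z \<in> NN b. \<forall>n. pm (a n) z \<in> A n"
proof -
  have anti: "n \<le> k \<Longrightarrow> a k \<le> a n" for n k
  proof -
    have "decseq a" using dec by (rule decseq_SucI)
    then show "n \<le> k \<Longrightarrow> a k \<le> a n" by (rule decseqD)
  qed
  have Acomp: "pm (a n) ` A k \<subseteq> A n" if "n \<le> k" for n k
    using that
  proof (induction k)
    case 0 then show ?case using sub pm_id by force
  next
    case (Suc k)
    show ?case
    proof (cases "n = Suc k")
      case True then show ?thesis using sub pm_id by force
    next
      case False
      then have nk: "n \<le> k" using Suc.prems by simp
      have "pm (a n) ` A (Suc k) = pm (a n) ` pm (a k) ` A (Suc k)"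
        using pm_pm[OF anti[OF nk]] by (simp add: image_image)
      also have "\<dots> \<subseteq> pm (a n) ` A k" using Ac by (intro image_mono) auto
      finally show ?thesis using Suc.IH[OF nk] by blast
    qed
  qed
  have Wcomp: "pm (a n) ` W k \<subseteq> W n" if "n \<le> k" for n k
    using that
  proof (induction k)
    case 0 then show ?case using WCM pm_id by force
  next
    case (Suc k)
    show ?case
    proof (cases "n = Suc k")
      case True then show ?thesis using WCM pm_id by force
    next
      case False
      then have nk: "n \<le> k" using Suc.prems by simp
      have "pm (a n) ` W (Suc k) = pm (a n) ` pm (a k) ` W (Suc k)"
        using pm_pm[OF anti[OF nk]] by (simp add: image_image)
      also have "\<dots> \<subseteq> pm (a n) ` W k" using Wc by (intro image_mono) auto
      finally show ?thesis using Suc.IH[OF nk] by blast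
    qed
  qed
  define I where "I n k = pm (a n) ` W k" for n k
  have I_sub: "fv.subspace (I n k)" for n k
    unfolding fv.subspace_def I_def
  proof (intro conjI ballI allI)
    have "0 \<in> W k" using Wsub[of k] unfolding fv.subspace_def by blast
    then show "0 \<in> pm (a n) ` W k" by (intro image_eqI[where x=0]) simp_all
  next
    fix x y assume "x \<in> pm (a n) ` W k" "y \<in> pm (a n) ` W k"
    then obtain x' y' where "x' \<in> W k" "y' \<in> W k" "x = pm (a n) x'" "y = pm (a n) y'" by auto
    moreover have "x' + y' \<in> W k" using Wsub[of k] \<open>x' \<in> W k\<close> \<open>y' \<in> W k\<close> unfolding fv.subspace_def by blast
    ultimately show "x + y \<in> pm (a n) ` W k" by (intro image_eqI[where x="x' + y'"]) (simp_all add: pm_add)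
  next
    fix c :: 'k and x assume "x \<in> pm (a n) ` W k"
    then obtain x' where "x' \<in> W k" "x = pm (a n) x'" by auto
    moreover have "(\<lambda>i. c * x' i) \<in> W k" using Wsub[of k] \<open>x' \<in> W k\<close> unfolding fv.subspace_def by blast
    ultimately show "(\<lambda>i. c * x i) \<in> pm (a n) ` W k" by (intro image_eqI[where x="\<lambda>i. c * x' i"]) (simp_all add: pm_smul)
  qed
  have I_CM: "I n k \<subseteq> CM (a n) b" for n k
    unfolding I_def using WCM pm_CM2 by blast
  have I_dec: "I n k' \<subseteq> I n k" if "n \<le> k" "k \<le> k'" for n k k'
  proof -
    have "I n k' = pm (a n) ` pm (a k) ` W k'" unfolding I_def
      using pm_pm[OF anti[OF that(1)]] by (simp add: image_image)
    also have "\<dots> \<subseteq> I n k" unfolding I_def using Wcomp[OF that(2)] by (intro image_mono)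
    finally show ?thesis .
  qed
  have I_stab: "\<exists>K\<ge>n. \<forall>k\<ge>K. I n k = I n K" for n
  proof -
    define d where "d k = fv.dim (I n (n + k))" for k
    have "d k' \<le> d k" if "k \<le> k'" for k k'
      unfolding d_def
    proof (rule dim_le_sub[where F="delta ` Cab C f (a n) b"])
      show "I n (n + k') \<subseteq> I n (n + k)" using I_dec[of n "n + k" "n + k'"] that by simp
      show "I n (n + k) \<subseteq> fv.span (delta ` Cab C f (a n) b)" using I_CM CM_span by blast
      show "finite (delta ` Cab C f (a n) b)" using fin_Cab by simp
    qed
    then have "\<exists>K. \<forall>k\<ge>K. d k = d K" by (rule dec_nat_stable)
    then obtain K where K: "\<forall>k\<ge>K. d k = d K" by blast
    have "\<forall>k\<ge>n + K. I n k = I n (n + K)"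
    proof (intro allI impI)
      fix k assume k: "n + K \<le> k"
      define j where "j = k - n"
      have j: "k = n + j" "K \<le> j" using k unfolding j_def by simp_all
      show "I n k = I n (n + K)"
      proof (rule sub_dim_eq[OF I_sub I_sub])
        show "I n k \<subseteq> I n (n + K)" using I_dec[of n "n + K" k] k by simp
        show "I n (n + K) \<subseteq> fv.span (delta ` Cab C f (a n) b)" using I_CM CM_span by blast
        show "finite (delta ` Cab C f (a n) b)" using fin_Cab by simp
        have "d j = d K" using K j(2) by blast
        then have "fv.dim (I n (n + j)) = fv.dim (I n (n + K))" unfolding d_def .
        then show "fv.dim (I n (n + K)) \<le> fv.dim (I n k)" unfolding j(1) by (rule eq_refl[OF sym])
      qed
    qed
    moreover have "n + K \<ge> n" by simp
    ultimately show ?thesis by blast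
  qed
  define P where "P n k = pm (a n) ` A k" for n k
  have P_eq: "P n k = (\<lambda>w. pm (a n) (v k) + w) ` I n k" for n k
    unfolding P_def I_def aff[of k] by (auto simp: image_image pm_add)
  have P_stab: "\<exists>K\<ge>n. \<forall>k\<ge>K. P n k = P n K" for n
  proof -
    obtain K where K: "K \<ge> n" "\<forall>k\<ge>K. I n k = I n K" using I_stab by blast
    have "P n k = P n K" if k: "k \<ge> K" for k
    proof -
      have "P n k \<subseteq> P n K"
      proof -
        have "P n k = pm (a n) ` pm (a K) ` A k" unfolding P_def
          using pm_pm[OF anti[OF K(1)]] by (simp add: image_image)
        also have "\<dots> \<subseteq> P n K" unfolding P_def using Acomp[OF k] by (intro image_mono)
        finally show ?thesis .
      qed
      moreover have "pm (a n) (v k) \<in> P n k" unfolding P_def using ne by blast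
      ultimately obtain i0 where i0: "i0 \<in> I n K" "pm (a n) (v k) = pm (a n) (v K) + i0"
        unfolding P_eq[of n K] by auto
      have "(\<lambda>w. i0 + w) ` I n K = I n K"
      proof (intro equalityI subsetI)
        fix y assume "y \<in> (\<lambda>w. i0 + w) ` I n K"
        then show "y \<in> I n K" using I_sub[of n K] i0(1) unfolding fv.subspace_def by auto
      next
        fix y assume y: "y \<in> I n K"
        have "- i0 \<in> I n K" using fv.subspace_neg[OF I_sub i0(1)] by simp
        then have "y + - i0 \<in> I n K" using I_sub[of n K] y unfolding fv.subspace_def by blast
        then have "y - i0 \<in> I n K" by simp
        moreover have "y = i0 + (y - i0)" by simp
        ultimately show "y \<in> (\<lambda>w. i0 + w) ` I n K" by blast
      qed
      note iI = this
      have "P n k = (\<lambda>w. pm (a n) (v K) + i0 + w) ` I n K" unfolding P_eq K(2)[rule_format, OF k] i0(2) ..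
      also have "\<dots> = (\<lambda>w. pm (a n) (v K) + w) ` ((\<lambda>w. i0 + w) ` I n K)"
        by (simp add: image_image add.assoc)
      also have "\<dots> = P n K" unfolding iI P_eq ..
      finally show ?thesis .
    qed
    then show ?thesis using K by blast
  qed
  define Kn where "Kn n = (SOME K. K \<ge> n \<and> (\<forall>k\<ge>K. P n k = P n K))" for n
  have Kn: "Kn n \<ge> n" "\<forall>k\<ge>Kn n. P n k = P n (Kn n)" for n
    using someI_ex[OF P_stab[of n]] unfolding Kn_def by blast+
  define E where "E n = P n (Kn n)" for n
  have E_sub: "E n \<subseteq> A n" for n unfolding E_def P_def using Acomp[OF Kn(1)[of n]] .
  have E_ne: "E n \<noteq> {}" for n unfolding E_def P_def using ne[of "Kn n"] by blast
  have E_step: "pm (a n) ` E (Suc n) = E n" for n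
  proof -
    define k where "k = max (Kn n) (Kn (Suc n))"
    have k1: "k \<ge> Kn (Suc n)" and k2: "k \<ge> Kn n" unfolding k_def by simp_all
    have "E (Suc n) = P (Suc n) k" unfolding E_def using Kn(2)[of "Suc n", rule_format, OF k1] by (rule sym)
    then have "pm (a n) ` E (Suc n) = P n k" unfolding P_def
      using pm_pm[OF dec[of n]] by (simp add: image_image)
    also have "\<dots> = E n" unfolding E_def using Kn(2)[of n, rule_format, OF k2] .
    finally show ?thesis .
  qed
  define x where "x = rec_nat (SOME y. y \<in> E 0) (\<lambda>n xn. SOME y. y \<in> E (Suc n) \<and> pm (a n) y = xn)"
  have x0: "x 0 = (SOME y. y \<in> E 0)" unfolding x_def by simp
  have xS: "x (Suc n) = (SOME y. y \<in> E (Suc n) \<and> pm (a n) y = x n)" for n unfolding x_def by simp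
  have xE: "x n \<in> E n \<and> pm (a n) (x (Suc n)) = x n" for n
  proof (induction n)
    case 0
    have "x 0 \<in> E 0" unfolding x0 using E_ne by (simp add: some_in_eq)
    then have ex: "\<exists>y. y \<in> E (Suc 0) \<and> pm (a 0) y = x 0" using E_step[of 0] by force
    show ?case using someI_ex[OF ex] xS[of 0] \<open>x 0 \<in> E 0\<close> by simp
  next
    case (Suc n)
    have ex1: "\<exists>y. y \<in> E (Suc n) \<and> pm (a n) y = x n" using E_step[of n] Suc.IH by force
    have xs: "x (Suc n) \<in> E (Suc n)" using someI_ex[OF ex1] xS[of n] by simp
    then have ex2: "\<exists>y. y \<in> E (Suc (Suc n)) \<and> pm (a (Suc n)) y = x (Suc n)" using E_step[of "Suc n"] by force
    show ?case using someI_ex[OF ex2] xS[of "Suc n"] xs by simp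
  qed
  have xA: "x n \<in> A n" for n using xE[of n] E_sub[of n] by blast
  have xCM: "x n \<in> CM (a n) b" for n using xA[of n] sub[of n] by blast
  have xcomp: "pm (a n) (x k) = x n" if "n \<le> k" for n k
    using that
  proof (induction k)
    case 0 then show ?case using pm_id[OF xCM] by simp
  next
    case (Suc k)
    show ?case
    proof (cases "n = Suc k")
      case True then show ?thesis using pm_id[OF xCM] by simp
    next
      case False
      then have nk: "n \<le> k" using Suc.prems by simp
      have "pm (a n) (x (Suc k)) = pm (a n) (pm (a k) (x (Suc k)))" using pm_pm[OF anti[OF nk]] by simp
      then show ?thesis using xE[of k] Suc.IH[OF nk] by simp
    qed
  qed
  define N where "N c = (LEAST n. a n \<le> f c)" for c
  have N: "a (N c) \<le> f c" for c
  proof -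
    obtain n where "a n \<le> f c" using unb by blast
    then show ?thesis unfolding N_def by (rule LeastI)
  qed
  have Nle: "a n \<le> f c \<Longrightarrow> N c \<le> n" for n c unfolding N_def by (rule Least_le)
  define z where "z c = x (N c) c" for c
  have pmz: "pm (a n) z = x n" for n
  proof (rule ext)
    fix c show "pm (a n) z c = x n c"
    proof (cases "a n \<le> f c")
      case True
      have "x (N c) c = pm (a (N c)) (x n) c" using xcomp[OF Nle[OF True]] by simp
      also have "\<dots> = x n c" using N by (simp add: pmap_def)
      finally show ?thesis using True by (simp add: pmap_def z_def)
    next
      case False
      then show ?thesis using xCM[of n] by (auto simp: pmap_def CM_iff)
    qed
  qed
  have "z \<in> NN b"
  proof -
    { fix c assume "z c \<noteq> 0"
      then have "x (N c) c \<noteq> 0" by (simp add: z_def)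
      then have "c \<in> C \<and> f c \<le> b" using xCM[of "N c"] by (auto simp: CM_iff) }
    then show ?thesis by (auto simp: NB_def)
  qed
  moreover have "\<forall>n. pm (a n) z \<in> A n" unfolding pmz using xA by blast
  ultimately show ?thesis by blast
qed

end



locale FTA = FT C f m for C :: "'c set" and f :: "'c \<Rightarrow> real" and m :: "'c \<Rightarrow> 'c \<Rightarrow> 'k::field" +
  fixes aseq :: "nat \<Rightarrow> real"
  assumes dec: "\<forall>j. aseq (Suc j) \<le> aseq j"
    and lim: "filterlim aseq at_bot sequentially"
begin

lemma decS: "aseq (Suc j) \<le> aseq j" using dec by blast

lemma anti: "n \<le> k \<Longrightarrow> aseq k \<le> aseq n"
proof -
  have "decseq aseq" using decS by (rule decseq_SucI)
  then show "n \<le> k \<Longrightarrow> aseq k \<le> aseq n" by (rule decseqD)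
qed

lemma unb: "\<exists>n. aseq n \<le> r"
proof -
  have "eventually (\<lambda>n. aseq n \<le> r) sequentially" using lim by (simp add: filterlim_at_bot)
  then show ?thesis by (meson eventually_sequentially order_refl)
qed

lemma fin_above: "finite {i. r < aseq i}"
proof -
  obtain N where N: "aseq N \<le> r" using unb by blast
  have "{i. r < aseq i} \<subseteq> {..<N}"
  proof
    fix i assume "i \<in> {i. r < aseq i}"
    then have "r < aseq i" by simp
    then show "i \<in> {..<N}" using anti[of N i] N by (cases "N \<le> i") auto
  qed
  then show ?thesis using finite_subset by blast
qed

lemma MLift1: assumes x: "x \<in> vcarr (LS b)" shows "\<exists>z \<in> GZ b. fam b z = x"
proof -
  have xa: "x a \<in> vcarr (HM a b)" for a using x by (simp add: LS_carr)
  have xc: "a1 \<le> a2 \<Longrightarrow> Hp C f m b a2 a1 (x a1) = x a2" for a1 a2 using x by (simp add: LS_carr)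
  define A where "A n = {r \<in> Z (aseq n) b. hc (aseq n) b r = x (aseq n)}" for n
  define v where "v n = (SOME r. r \<in> A n)" for n
  have vA: "v n \<in> A n" for n
  proof -
    obtain r where "r \<in> Z (aseq n) b" "x (aseq n) = hc (aseq n) b r" using HM_elem[OF xa] by blast
    then have "r \<in> A n" by (simp add: A_def)
    then show ?thesis unfolding v_def using someI[of "\<lambda>r. r \<in> A n"] by blast
  qed
  have "\<exists>z \<in> NN b. \<forall>n. pm (aseq n) z \<in> A n"
  proof (rule MLift[where W="\<lambda>n. B (aseq n) b" and v=v])
    show "aseq (Suc n) \<le> aseq n" for n by (rule decS)
    show "\<exists>n. aseq n \<le> r" for r by (rule unb)
    show "A n \<subseteq> CM (aseq n) b" for n by (auto simp: A_def cycles_iff)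
    show "v n \<in> A n" for n by (rule vA)
    show "A n = (\<lambda>w. v n + w) ` B (aseq n) b" for n
    proof (intro equalityI subsetI)
      fix r assume r: "r \<in> A n"
      have "hc (aseq n) b r = hc (aseq n) b (v n)" using r vA[of n] by (simp add: A_def)
      then have "r - v n \<in> B (aseq n) b" using hc_eq by blast
      moreover have "r = v n + (r - v n)" by simp
      ultimately show "r \<in> (\<lambda>w. v n + w) ` B (aseq n) b" by blast
    next
      fix r assume "r \<in> (\<lambda>w. v n + w) ` B (aseq n) b"
      then obtain w where w: "w \<in> B (aseq n) b" "r = v n + w" by blast
      have "r \<in> Z (aseq n) b" using w vA[of n] Z_add bdries_cycles by (simp add: A_def)
      moreover have "hc (aseq n) b r = hc (aseq n) b (v n)" using w hc_eq by simp
      ultimately show "r \<in> A n" using vA[of n] by (simp add: A_def)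
    qed
    show "fv.subspace (B (aseq n) b)" for n
      unfolding fv.subspace_def using B_zero B_add B_smul by blast
    show "B (aseq n) b \<subseteq> CM (aseq n) b" for n using bdries_CM by blast
    show "pm (aseq n) ` A (Suc n) \<subseteq> A n" for n
    proof
      fix y assume "y \<in> pm (aseq n) ` A (Suc n)"
      then obtain r where r: "r \<in> A (Suc n)" "y = pm (aseq n) r" by blast
      have "y \<in> Z (aseq n) b" using r Z_pm[OF _ decS] by (simp add: A_def)
      moreover have "hc (aseq n) b y = x (aseq n)"
      proof -
        have "hc (aseq n) b y = Hp C f m b (aseq n) (aseq (Suc n)) (hc (aseq (Suc n)) b r)"
          using r(2) Hp_hc[OF decS[of n], where b=b and z=r] by simp
        also have "\<dots> = Hp C f m b (aseq n) (aseq (Suc n)) (x (aseq (Suc n)))" using r(1) by (simp add: A_def)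
        also have "\<dots> = x (aseq n)" by (rule xc[OF decS])
        finally show ?thesis .
      qed
      ultimately show "y \<in> A n" by (simp add: A_def)
    qed
    show "pm (aseq n) ` B (aseq (Suc n)) b \<subseteq> B (aseq n) b" for n using B_pm[OF _ decS] by blast
  qed
  then obtain z where z: "z \<in> NN b" "\<And>n. pm (aseq n) z \<in> A n" by blast
  have Dz: "D z = 0"
  proof
    fix c' obtain n where n: "aseq n \<le> f c'" using unb by blast
    have "pm (aseq n) z \<in> Z (aseq n) b" using z(2)[of n] by (simp add: A_def)
    then have "pm (aseq n) (D (pm (aseq n) z)) c' = 0" by (simp add: cycles_iff)
    then show "D z c' = 0 c'" using n D_pm2[OF z(1) n] by (simp add: pmap_def)
  qed
  have "fam b z = x"
  proof
    fix a obtain n where n: "aseq n \<le> a" using unb by blast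
    have "hc a b (pm a z) = Hp C f m b a (aseq n) (hc (aseq n) b (pm (aseq n) z))"
      using Hp_hc[OF n] pm_pm[OF n] by simp
    also have "\<dots> = x a" using z(2)[of n] xc[OF n] by (simp add: A_def)
    finally show "fam b z a = x a" by (simp add: fam_def)
  qed
  moreover have "z \<in> GZ b" using z(1) Dz by (simp add: GZ_def)
  ultimately show ?thesis by blast
qed

lemma MLift2: assumes zB: "\<And>n. pm (aseq n) z \<in> B (aseq n) e"
  shows "\<exists>w \<in> NN e. \<forall>n. pm (aseq n) (D w) = pm (aseq n) z"
proof -
  define A where "A n = {w \<in> CM (aseq n) e. pm (aseq n) (D w) = pm (aseq n) z}" for n
  define v where "v n = (SOME r. r \<in> A n)" for n
  have vA: "v n \<in> A n" for n
  proof -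
    obtain r where "r \<in> CM (aseq n) e" "pm (aseq n) z = pm (aseq n) (D r)" using zB[of n] by (auto simp: bdries_iff)
    then have "r \<in> A n" by (simp add: A_def)
    then show ?thesis unfolding v_def using someI[of "\<lambda>r. r \<in> A n"] by blast
  qed
  have "\<exists>w \<in> NN e. \<forall>n. pm (aseq n) w \<in> A n"
  proof (rule MLift[where W="\<lambda>n. Z (aseq n) e" and v=v])
    show "aseq (Suc n) \<le> aseq n" for n by (rule decS)
    show "\<exists>n. aseq n \<le> r" for r by (rule unb)
    show "A n \<subseteq> CM (aseq n) e" for n by (auto simp: A_def)
    show "v n \<in> A n" for n by (rule vA)
    show "A n = (\<lambda>w. v n + w) ` Z (aseq n) e" for n
    proof (intro equalityI subsetI)
      fix r assume r: "r \<in> A n"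
      have rr: "r \<in> CM (aseq n) e" "pm (aseq n) (D r) = pm (aseq n) z" using r by (auto simp: A_def)
      have vv: "v n \<in> CM (aseq n) e" "pm (aseq n) (D (v n)) = pm (aseq n) z" using vA[of n] by (auto simp: A_def)
      have "pm (aseq n) (D (r - v n)) = 0" using rr vv D_diff[OF CM_NB[OF rr(1)] CM_NB[OF vv(1)]] by (simp add: pm_diff)
      then have "r - v n \<in> Z (aseq n) e" using r vA[of n] CM_diff by (simp add: A_def cycles_iff)
      moreover have "r = v n + (r - v n)" by simp
      ultimately show "r \<in> (\<lambda>w. v n + w) ` Z (aseq n) e" by blast
    next
      fix r assume "r \<in> (\<lambda>w. v n + w) ` Z (aseq n) e"
      then obtain w where w: "w \<in> Z (aseq n) e" "r = v n + w" by blast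
      have v: "v n \<in> CM (aseq n) e" "pm (aseq n) (D (v n)) = pm (aseq n) z" using vA[of n] by (auto simp: A_def)
      have wc: "w \<in> CM (aseq n) e" "pm (aseq n) (D w) = 0" using w(1) by (auto simp: cycles_iff)
      have "pm (aseq n) (D r) = pm (aseq n) z"
        using w(2) v wc D_add[OF CM_NB[OF v(1)] CM_NB[OF wc(1)]] by (simp add: pm_add)
      then show "r \<in> A n" using CM_add[OF v(1) wc(1)] w(2) by (simp add: A_def)
    qed
    show "fv.subspace (Z (aseq n) e)" for n
      unfolding fv.subspace_def using Z_zero Z_add Z_smul by blast
    show "Z (aseq n) e \<subseteq> CM (aseq n) e" for n by (auto simp: cycles_iff)
    show "pm (aseq n) ` A (Suc n) \<subseteq> A n" for n
    proof
      fix y assume "y \<in> pm (aseq n) ` A (Suc n)"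
      then obtain r where r: "r \<in> A (Suc n)" "y = pm (aseq n) r" by blast
      have rC: "r \<in> CM (aseq (Suc n)) e" using r by (simp add: A_def)
      have "pm (aseq n) (D y) = pm (aseq n) (D r)" using r(2) D_pm[OF CM_NB[OF rC]] by simp
      also have "\<dots> = pm (aseq n) (pm (aseq (Suc n)) (D r))" using pm_pm[OF decS] by simp
      also have "\<dots> = pm (aseq n) (pm (aseq (Suc n)) z)" using r by (simp add: A_def)
      also have "\<dots> = pm (aseq n) z" using pm_pm[OF decS] by simp
      finally show "y \<in> A n" using r(2) pm_CM2[OF rC] by (simp add: A_def)
    qed
    show "pm (aseq n) ` Z (aseq (Suc n)) e \<subseteq> Z (aseq n) e" for n using Z_pm[OF _ decS] by blast
  qed
  then obtain w where w: "w \<in> NN e" "\<And>n. pm (aseq n) w \<in> A n" by blast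
  have "pm (aseq n) (D w) = pm (aseq n) z" for n
    using w(2)[of n] D_pm[OF w(1)] by (simp add: A_def)
  then show ?thesis using w(1) by blast
qed

end



context FT begin

definition BA :: "('c \<Rightarrow> 'k) \<Rightarrow> bool" where "BA x \<longleftrightarrow> (\<exists>b. x \<in> NN b)"

lemma NN_BA: "x \<in> NN b \<Longrightarrow> BA x" by (auto simp: BA_def)
lemma CM_BA: "x \<in> CM a b \<Longrightarrow> BA x" using CM_NB NN_BA by blast

lemma BA_common: assumes "BA x" "BA y" obtains b where "x \<in> NN b" "y \<in> NN b"
proof -
  obtain b1 b2 where "x \<in> NN b1" "y \<in> NN b2" using assms by (auto simp: BA_def)
  then have "x \<in> NN (max b1 b2)" "y \<in> NN (max b1 b2)" by (auto intro: NB_mono)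
  then show ?thesis using that by blast
qed

lemma BA_add: assumes "BA x" "BA y" shows "BA (x + y)"
proof -
  obtain b where "x \<in> NN b" "y \<in> NN b" using BA_common[OF assms] .
  then show ?thesis by (intro NN_BA NB_add)
qed
lemma BA_diff: assumes "BA x" "BA y" shows "BA (x - y)"
proof -
  obtain b where "x \<in> NN b" "y \<in> NN b" using BA_common[OF assms] .
  then show ?thesis by (intro NN_BA NB_diff)
qed
lemma BA_uminus: "BA x \<Longrightarrow> BA (- x)" unfolding BA_def using NB_uminus by blast
lemma BA_smul: "BA x \<Longrightarrow> BA (\<lambda>c. k * x c)" unfolding BA_def using NB_smul by blast
lemma BA_zero[simp]: "BA 0" using NB_zero NN_BA by blast
lemma BA_pm: "BA x \<Longrightarrow> BA (pm a x)" unfolding BA_def using pm_CM CM_NB by blast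
lemma BA_D: "BA x \<Longrightarrow> BA (D x)" unfolding BA_def using D_NB by blast
lemma BA_sum: "finite I \<Longrightarrow> (\<And>i. i \<in> I \<Longrightarrow> BA (g i)) \<Longrightarrow> BA (\<Sum>i\<in>I. g i)"
  by (induction I rule: finite_induct) (auto intro: BA_add)

lemma DA_add: assumes "BA x" "BA y" shows "D (x + y) = D x + D y"
proof -
  obtain b where "x \<in> NN b" "y \<in> NN b" using BA_common[OF assms] .
  then show ?thesis by (rule D_add)
qed
lemma DA_diff: assumes "BA x" "BA y" shows "D (x - y) = D x - D y"
proof -
  obtain b where "x \<in> NN b" "y \<in> NN b" using BA_common[OF assms] .
  then show ?thesis by (rule D_diff)
qed
lemma DA_uminus: "BA x \<Longrightarrow> D (- x) = - D x" unfolding BA_def using D_uminus by blast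
lemma DA_smul: "BA x \<Longrightarrow> D (\<lambda>c. k * x c) = (\<lambda>c. k * D x c)" unfolding BA_def using D_smul by blast
lemma DDA: "BA x \<Longrightarrow> D (D x) = 0" unfolding BA_def using DD by blast
lemma D_pmA: "BA x \<Longrightarrow> pm a (D (pm a x)) = pm a (D x)" unfolding BA_def using D_pm by blast
lemma DA_sum: "finite I \<Longrightarrow> (\<And>i. i \<in> I \<Longrightarrow> BA (g i)) \<Longrightarrow> D (\<Sum>i\<in>I. g i) = (\<Sum>i\<in>I. D (g i))"
proof (induction I rule: finite_induct)
  case (insert i I)
  have e1: "sum g (insert i I) = g i + sum g I" by (rule sum.insert[OF insert(1,2)])
  have e2: "(\<Sum>i\<in>insert i I. D (g i)) = D (g i) + (\<Sum>i\<in>I. D (g i))" by (rule sum.insert[OF insert(1,2)])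
  have "D (g i + sum g I) = D (g i) + D (sum g I)"
    using insert.prems by (intro DA_add BA_sum insert(1)) auto
  moreover have ih: "D (sum g I) = (\<Sum>i\<in>I. D (g i))" using insert.IH insert.prems by blast
  ultimately show ?case unfolding e1 e2 by (simp only: ih)
qed simp

definition lo :: "real \<Rightarrow> ('c \<Rightarrow> 'k) \<Rightarrow> ('c \<Rightarrow> 'k)" where "lo a x = x - pm a x"

lemma lo_NN: assumes "BA x" "a \<le> a'" "\<forall>c. x c \<noteq> 0 \<longrightarrow> c \<in> C" shows "lo a x \<in> NN a'"
  using assms by (auto simp: lo_def NB_def pmap_def)

lemma BA_inC: "BA x \<Longrightarrow> x c \<noteq> 0 \<Longrightarrow> c \<in> C" by (auto simp: BA_def NB_def)

lemma BND: assumes "\<And>j. \<exists>v \<in> NN E. pm (aseq j) X = pm (aseq j) (D v)" and unb: "\<And>r. \<exists>n. aseq n \<le> r"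
  shows "pm a X \<in> B a E"
proof -
  obtain j where j: "aseq j \<le> a" using unb by blast
  obtain v where v: "v \<in> NN E" "pm (aseq j) X = pm (aseq j) (D v)" using assms(1) by blast
  have "pm a X = pm a (pm (aseq j) X)" using pm_pm[OF j] by simp
  also have "\<dots> = pm a (D v)" using v(2) pm_pm[OF j] by simp
  also have "\<dots> = pm a (D (pm a v))" using D_pm[OF v(1)] by simp
  finally show ?thesis using pm_CM[OF v(1)] by (auto simp: bdries_iff)
qed

end

context FTA begin

definition FZ :: "real \<Rightarrow> ('c \<Rightarrow> 'k) set" where "FZ a = {x. \<exists>b. x \<in> Z a b}"
definition PP :: "(nat \<Rightarrow> 'c \<Rightarrow> 'k) set" where "PP = {y. \<forall>j. y j \<in> FZ (aseq j)}"
definition zz :: "(nat \<Rightarrow> 'c \<Rightarrow> 'k) \<Rightarrow> ('c \<Rightarrow> 'k)" where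
  "zz y = (\<lambda>c. - (\<Sum>i\<in>{i. f c < aseq i}. D (y i) c))"
definition uu :: "(nat \<Rightarrow> 'c \<Rightarrow> 'k) \<Rightarrow> nat \<Rightarrow> ('c \<Rightarrow> 'k)" where
  "uu y j = - (\<Sum>i<j. y i)"
definition Dp :: "(nat \<Rightarrow> 'c \<Rightarrow> 'k) \<Rightarrow> nat \<Rightarrow> ('c \<Rightarrow> 'k)" where
  "Dp g j = g j - pm (aseq j) (g (Suc j))"

lemma Z_common: assumes "x \<in> Z a b1" "y \<in> Z a b2" obtains b where "x \<in> Z a b" "y \<in> Z a b"
proof -
  have "x \<in> Z a (max b1 b2)" "y \<in> Z a (max b1 b2)" using assms by (auto intro: Z_mono)
  then show ?thesis using that by blast
qed

lemma FZ_add: assumes "x \<in> FZ a" "y \<in> FZ a" shows "x + y \<in> FZ a"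
proof -
  obtain b1 b2 where "x \<in> Z a b1" "y \<in> Z a b2" using assms by (auto simp: FZ_def)
  then obtain b where "x \<in> Z a b" "y \<in> Z a b" by (rule Z_common)
  then have "x + y \<in> Z a b" by (rule Z_add)
  then show ?thesis by (auto simp: FZ_def)
qed
lemma FZ_diff: assumes "x \<in> FZ a" "y \<in> FZ a" shows "x - y \<in> FZ a"
proof -
  obtain b1 b2 where "x \<in> Z a b1" "y \<in> Z a b2" using assms by (auto simp: FZ_def)
  then obtain b where "x \<in> Z a b" "y \<in> Z a b" by (rule Z_common)
  then have "x - y \<in> Z a b" by (rule Z_diff)
  then show ?thesis by (auto simp: FZ_def)
qed
lemma FZ_uminus: "x \<in> FZ a \<Longrightarrow> - x \<in> FZ a"
  unfolding FZ_def using Z_uminus by blast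
lemma FZ_smul: "x \<in> FZ a \<Longrightarrow> (\<lambda>c. k * x c) \<in> FZ a"
  unfolding FZ_def using Z_smul by blast
lemma FZ_zero: "0 \<in> FZ a"
  unfolding FZ_def using Z_zero by blast
lemma FZ_pm: "x \<in> FZ a \<Longrightarrow> a \<le> a' \<Longrightarrow> pm a' x \<in> FZ a'"
  unfolding FZ_def using Z_pm by blast
lemma FZ_BA: "x \<in> FZ a \<Longrightarrow> BA x"
  unfolding FZ_def cycles_iff using CM_BA by blast
lemma FZ_cyc: "x \<in> FZ a \<Longrightarrow> pm a (D x) = 0"
  unfolding FZ_def cycles_iff by blast
lemma FZ_CM: "x \<in> FZ a \<Longrightarrow> \<exists>b. x \<in> CM a b"
  unfolding FZ_def cycles_iff by blast

lemma PP_FZ: "y \<in> PP \<Longrightarrow> y i \<in> FZ (aseq i)" by (simp add: PP_def)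
lemma PP_BA: "y \<in> PP \<Longrightarrow> BA (y i)" using FZ_BA[OF PP_FZ] .

lemma PP_add: "y \<in> PP \<Longrightarrow> y' \<in> PP \<Longrightarrow> y + y' \<in> PP" by (simp add: PP_def FZ_add)
lemma PP_diff: "y \<in> PP \<Longrightarrow> y' \<in> PP \<Longrightarrow> y - y' \<in> PP" by (simp add: PP_def FZ_diff)
lemma PP_uminus: "y \<in> PP \<Longrightarrow> - y \<in> PP" by (simp add: PP_def FZ_uminus)
lemma PP_smul: "y \<in> PP \<Longrightarrow> (\<lambda>j c. k * y j c) \<in> PP" by (simp add: PP_def FZ_smul)
lemma PP_zero: "0 \<in> PP" by (simp add: PP_def FZ_zero)
lemma PP_Dp: "g \<in> PP \<Longrightarrow> Dp g \<in> PP"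
  unfolding PP_def Dp_def using FZ_diff FZ_pm decS by blast

lemma uu_CM: assumes "y \<in> PP" shows "\<exists>b. uu y j \<in> CM (aseq j) b"
proof (induction j)
  case 0 have "uu y 0 = 0" by (simp add: uu_def)
  then show ?case using CM_zero by metis
next
  case (Suc j)
  then obtain b where b: "uu y j \<in> CM (aseq j) b" by blast
  have "y j \<in> FZ (aseq j)" using assms by (simp add: PP_def)
  then obtain b' where b': "y j \<in> CM (aseq j) b'" using FZ_CM by blast
  have eq: "uu y (Suc j) = uu y j - y j" by (simp add: uu_def)
  have m1: "uu y j - y j \<in> CM (aseq j) (max b b')"
    using CM_mono[OF b] CM_mono[OF b'] by (intro CM_diff) auto
  have m2: "CM (aseq j) (max b b') \<subseteq> CM (aseq (Suc j)) (max b b')"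
  proof
    fix x assume x: "x \<in> CM (aseq j) (max b b')"
    have "aseq (Suc j) \<le> aseq j" by (rule decS)
    show "x \<in> CM (aseq (Suc j)) (max b b')" unfolding CM_iff
    proof (intro allI impI)
      fix c assume "x c \<noteq> 0"
      then have h: "c \<in> C \<and> aseq j \<le> f c \<and> f c \<le> max b b'" using x unfolding CM_iff by blast
      then show "c \<in> C \<and> aseq (Suc j) \<le> f c \<and> f c \<le> max b b'" using \<open>aseq (Suc j) \<le> aseq j\<close> by simp
    qed
  qed
  have "uu y j - y j \<in> CM (aseq (Suc j)) (max b b')" using m2 m1 by (rule subsetD)
  then show ?case unfolding eq by blast
qed

lemma uu_BA: "y \<in> PP \<Longrightarrow> BA (uu y j)" using uu_CM CM_BA by blast

lemma uu_Suc: "uu y (Suc j) = uu y j - y j" by (simp add: uu_def)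

lemma K: assumes y: "y \<in> PP" shows "pm (aseq j) (zz y) = pm (aseq j) (D (uu y j))"
proof
  fix c show "pm (aseq j) (zz y) c = pm (aseq j) (D (uu y j)) c"
  proof (cases "aseq j \<le> f c")
    case True
    have yBA: "BA (y i)" for i using y FZ_BA by (auto simp: PP_def)
    have "D (uu y j) = - D (\<Sum>i<j. y i)"
      unfolding uu_def by (rule DA_uminus[OF BA_sum]) (use yBA in auto)
    also have "D (\<Sum>i<j. y i) = (\<Sum>i<j. D (y i))" by (rule DA_sum) (use yBA in auto)
    finally have "D (uu y j) = - (\<Sum>i<j. D (y i))" .
    then have Du: "D (uu y j) c = - (\<Sum>i<j. D (y i) c)" by (simp add: sum_fun_apply)
    have sub: "{i. f c < aseq i} \<subseteq> {..<j}"
    proof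
      fix i assume "i \<in> {i. f c < aseq i}"
      then have "f c < aseq i" by simp
      then show "i \<in> {..<j}" using anti[of j i] True by (cases "j \<le> i") auto
    qed
    have "(\<Sum>i<j. D (y i) c) = (\<Sum>i\<in>{i. f c < aseq i}. D (y i) c)"
    proof (rule sum.mono_neutral_right[OF _ sub])
      show "finite {..<j}" by simp
      show "\<forall>i\<in>{..<j} - {i. f c < aseq i}. D (y i) c = 0"
      proof
        fix i assume "i \<in> {..<j} - {i. f c < aseq i}"
        then have "aseq i \<le> f c" by auto
        moreover have "pm (aseq i) (D (y i)) = 0" using y FZ_cyc by (auto simp: PP_def)
        ultimately show "D (y i) c = 0" using fun_cong[of "pm (aseq i) (D (y i))" 0 c] unfolding pmap_def by simp
      qed
    qed
    then show ?thesis using True Du by (simp add: pmap_def zz_def)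
  qed (simp add: pmap_def)
qed

lemma zz_GZ: assumes y: "y \<in> PP" shows "zz y \<in> GZ (aseq 0)"
proof -
  have yBA: "BA (y i)" for i using y FZ_BA by (auto simp: PP_def)
  have NN: "zz y \<in> NN (aseq 0)"
  proof -
    { fix c assume nz: "zz y c \<noteq> 0"
      then have "(\<Sum>i\<in>{i. f c < aseq i}. D (y i) c) \<noteq> 0" unfolding zz_def by simp
      then have "\<exists>i \<in> {i. f c < aseq i}. D (y i) c \<noteq> 0"
      proof (rule contrapos_pp)
        assume "\<not> (\<exists>i \<in> {i. f c < aseq i}. D (y i) c \<noteq> 0)"
        then show "\<not> (\<Sum>i\<in>{i. f c < aseq i}. D (y i) c) \<noteq> 0" by (simp add: sum.neutral)
      qed
      then obtain i where i: "f c < aseq i" "D (y i) c \<noteq> 0" by blast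
      then have "c \<in> C" using D_notC by blast
      moreover have "f c \<le> aseq 0" using i(1) anti[of 0 i] by simp
      ultimately have "c \<in> C \<and> f c \<le> aseq 0" by simp }
    then show ?thesis by (auto simp: NB_def)
  qed
  have "D (zz y) = 0"
  proof
    fix c obtain j where j: "aseq j \<le> f c" using unb by blast
    have "D (zz y) c = D (pm (aseq j) (zz y)) c" using D_pm2[OF NN j] by simp
    also have "\<dots> = D (pm (aseq j) (D (uu y j))) c" using K[OF y] by simp
    also have "\<dots> = D (D (uu y j)) c"
    proof -
      obtain bb where "D (uu y j) \<in> NN bb" using BA_D[OF uu_BA[OF y]] by (auto simp: BA_def)
      then show ?thesis using D_pm2[OF _ j] by blast
    qed
    also have "\<dots> = 0" using DDA[OF uu_BA[OF y]] by simp
    finally show "D (zz y) c = 0 c" by simp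
  qed
  then show ?thesis using NN by (simp add: GZ_def)
qed

lemma zz_add: assumes "y \<in> PP" "y' \<in> PP" shows "zz (y + y') = zz y + zz y'"
proof -
  have "D (y i + y' i) = D (y i) + D (y' i)" for i
    using DA_add[OF PP_BA[OF assms(1)] PP_BA[OF assms(2)]] .
  then show ?thesis by (auto simp: zz_def fun_eq_iff sum.distrib)
qed

lemma zz_smul: assumes "y \<in> PP" shows "zz (\<lambda>j c. k * y j c) = (\<lambda>c. k * zz y c)"
proof -
  have "D (\<lambda>c. k * y i c) = (\<lambda>c. k * D (y i) c)" for i
    using DA_smul[OF PP_BA[OF assms(1)]] .
  then show ?thesis by (auto simp: zz_def fun_eq_iff sum_distrib_left)
qed

lemma zz_diff: assumes "y \<in> PP" "y' \<in> PP" shows "zz (y - y') = zz y - zz y'"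
proof -
  have "D (y i - y' i) = D (y i) - D (y' i)" for i
    using DA_diff[OF PP_BA[OF assms(1)] PP_BA[OF assms(2)]] .
  then show ?thesis by (auto simp: zz_def fun_eq_iff sum_subtractf)
qed

lemma telesc: "(\<Sum>i<j. Dp g i) = g 0 - g j + (\<Sum>i<j. lo (aseq i) (g (Suc i)))"
proof -
  have "Dp g i = (g i - g (Suc i)) + lo (aseq i) (g (Suc i))" for i by (simp add: Dp_def lo_def)
  then have "(\<Sum>i<j. Dp g i) = (\<Sum>i<j. g i - g (Suc i)) + (\<Sum>i<j. lo (aseq i) (g (Suc i)))"
    by (simp add: sum.distrib)
  moreover have "(\<Sum>i<j. g i - g (Suc i)) = g 0 - g j"
    using sum_lessThan_telescope'[of g j] by simp
  ultimately show ?thesis by simp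
qed

end



context FTA begin

lemma lo_NN0: "BA x \<Longrightarrow> lo (aseq i) x \<in> NN (aseq 0)"
  using lo_NN[of x "aseq i" "aseq 0"] anti[of 0 i] BA_inC[of x] by blast

lemma lo_BA: "BA x \<Longrightarrow> BA (lo a x)"
  unfolding lo_def by (intro BA_diff BA_pm)

lemma C1a: assumes d: "d \<in> PP" and zB: "\<And>a. pm a (zz d) \<in> B a e"
  shows "\<exists>g \<in> PP. \<forall>j. d j - Dp g j = 0"
proof -
  obtain w where w: "w \<in> NN e" "\<And>n. pm (aseq n) (D w) = pm (aseq n) (zz d)"
    using MLift2[of "zz d" e] zB by blast
  define g where "g j = uu d j - pm (aseq j) w" for j
  have wBA: "BA w" using w(1) by (rule NN_BA)
  have gZ: "g j \<in> Z (aseq j) (max b e)" if "uu d j \<in> CM (aseq j) b" for j b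
  proof -
    have c1: "uu d j \<in> CM (aseq j) (max b e)" using CM_mono[OF that] by simp
    have c2: "pm (aseq j) w \<in> CM (aseq j) (max b e)" using CM_mono[OF pm_CM[OF w(1)]] by simp
    have "pm (aseq j) (D (g j)) = pm (aseq j) (D (uu d j)) - pm (aseq j) (D (pm (aseq j) w))"
      unfolding g_def using DA_diff[OF CM_BA[OF c1] CM_BA[OF c2]] by (simp add: pm_diff)
    also have "\<dots> = pm (aseq j) (zz d) - pm (aseq j) (D w)" using K[OF d] D_pmA[OF wBA] by simp
    also have "\<dots> = 0" using w(2) by simp
    finally show ?thesis using CM_diff[OF c1 c2] unfolding g_def cycles_iff by simp
  qed
  have gPP: "g \<in> PP" unfolding PP_def FZ_def using gZ uu_CM[OF d] by blast
  have "d j - Dp g j = 0" for j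
  proof -
    obtain b where b: "uu d j \<in> CM (aseq j) b" using uu_CM[OF d] by blast
    obtain b' where b': "d j \<in> CM (aseq j) b'" using FZ_CM[OF PP_FZ[OF d]] by blast
    have "Dp g j = uu d j - pm (aseq j) w - pm (aseq j) (uu d (Suc j) - pm (aseq (Suc j)) w)"
      by (simp add: Dp_def g_def)
    also have "\<dots> = uu d j - pm (aseq j) (uu d (Suc j))"
      using pm_pm[OF decS[of j]] by (simp add: pm_diff)
    also have "\<dots> = uu d j - (uu d j - d j)" using pm_id[OF b] pm_id[OF b'] by (simp add: uu_Suc pm_diff)
    finally show ?thesis by simp
  qed
  then show ?thesis using gPP by blast
qed

lemma C1b: assumes d: "d \<in> PP" and g: "g \<in> PP" and dg: "\<And>j. \<exists>b. d j - Dp g j \<in> B (aseq j) b"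
  shows "\<exists>E. \<forall>a. pm a (zz d) \<in> B a E"
proof -
  have "\<exists>ee. \<forall>j. ee j \<in> CM (aseq j) (SOME b. d j - Dp g j \<in> B (aseq j) b) \<and> d j - Dp g j = pm (aseq j) (D (ee j))"
  proof -
    have "\<forall>j. \<exists>x. x \<in> CM (aseq j) (SOME b. d j - Dp g j \<in> B (aseq j) b) \<and> d j - Dp g j = pm (aseq j) (D x)"
    proof
      fix j
      have "d j - Dp g j \<in> B (aseq j) (SOME b. d j - Dp g j \<in> B (aseq j) b)" using someI_ex[OF dg[of j]] .
      then show "\<exists>x. x \<in> CM (aseq j) (SOME b. d j - Dp g j \<in> B (aseq j) b) \<and> d j - Dp g j = pm (aseq j) (D x)"
        by (auto simp: bdries_iff)
    qed
    then show ?thesis by (rule choice)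
  qed
  then obtain ee where ee: "\<And>j. BA (ee j)" "\<And>j. d j - Dp g j = pm (aseq j) (D (ee j))"
    using CM_BA by blast
  have gBA: "BA (g i)" for i by (rule PP_BA[OF g])
  have dj: "d j = Dp g j + pm (aseq j) (D (ee j))" for j using ee(2)[of j] by (simp add: algebra_simps)
  obtain b0 where b0: "g 0 \<in> NN b0" using gBA[of 0] by (auto simp: BA_def)
  define E where "E = max b0 (aseq 0)"
  define R where "R j = (\<Sum>i<j. lo (aseq i) (g (Suc i)))" for j
  define S where "S j = (\<Sum>i<j. D (ee i))" for j
  define Q where "Q j = (\<Sum>i<j. lo (aseq i) (D (ee i)))" for j
  define v where "v j = Q j - R j - g 0" for j
  have RN: "R j \<in> NN (aseq 0)" for j unfolding R_def by (intro NB_sum lo_NN0 gBA) auto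
  have QN: "Q j \<in> NN (aseq 0)" for j unfolding Q_def by (intro NB_sum lo_NN0 BA_D ee(1)) auto
  have vN: "v j \<in> NN E" for j
  proof -
    have "Q j \<in> NN E" "R j \<in> NN E" "g 0 \<in> NN E" using NB_mono[OF QN] NB_mono[OF RN] NB_mono[OF b0] by (auto simp: E_def)
    then show ?thesis unfolding v_def by (intro NB_diff)
  qed
  have SBA: "BA (S j)" for j unfolding S_def by (intro BA_sum BA_D ee(1)) auto
  have DS: "D (S j) = 0" for j
  proof -
    have "D (S j) = (\<Sum>i<j. D (D (ee i)))" unfolding S_def by (rule DA_sum) (auto intro: BA_D ee(1))
    then show ?thesis using DDA[OF ee(1)] by simp
  qed
  have sum_pm: "(\<Sum>i<j. pm (aseq i) (D (ee i))) = S j - Q j" for j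
    unfolding S_def Q_def lo_def by (simp add: sum_subtractf)
  have uu_eq: "uu d j = v j + g j - S j" for j
  proof -
    have "(\<Sum>i<j. d i) = (\<Sum>i<j. Dp g i) + (\<Sum>i<j. pm (aseq i) (D (ee i)))"
      by (simp add: dj sum.distrib)
    also have "\<dots> = g 0 - g j + R j + (S j - Q j)" unfolding telesc sum_pm R_def ..
    finally show ?thesis unfolding uu_def v_def by (simp add: algebra_simps)
  qed
  have "pm (aseq j) (zz d) = pm (aseq j) (D (v j))" for j
  proof -
    have vBA: "BA (v j)" using vN by (rule NN_BA)
    have "D (uu d j) = D (v j) + D (g j) - D (S j)"
      unfolding uu_eq using DA_diff[OF BA_add[OF vBA gBA] SBA] DA_add[OF vBA gBA] by simp
    then have "pm (aseq j) (D (uu d j)) = pm (aseq j) (D (v j)) + pm (aseq j) (D (g j))"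
      using DS by (simp add: pm_add)
    moreover have "pm (aseq j) (D (g j)) = 0" using FZ_cyc[OF PP_FZ[OF g]] .
    ultimately show ?thesis using K[OF d] by simp
  qed
  then have "\<And>j. \<exists>v \<in> NN E. pm (aseq j) (zz d) = pm (aseq j) (D v)" using vN by blast
  then have "\<forall>a. pm a (zz d) \<in> B a E" using BND unb by blast
  then show ?thesis by blast
qed

lemma surj_core: assumes z: "z \<in> GZ b" and zB: "\<And>a. \<exists>e. pm a z \<in> B a e"
  shows "\<exists>y \<in> PP. \<exists>E. \<forall>a. pm a (z - zz y) \<in> B a E"
proof -
  have zN: "z \<in> NN b" and Dz: "D z = 0" using z by (auto simp: GZ_def)
  have "\<forall>j. \<exists>w. (\<exists>e. w \<in> CM (aseq j) e) \<and> pm (aseq j) z = pm (aseq j) (D w)"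
  proof
    fix j obtain e where "pm (aseq j) z \<in> B (aseq j) e" using zB by blast
    then show "\<exists>w. (\<exists>e. w \<in> CM (aseq j) e) \<and> pm (aseq j) z = pm (aseq j) (D w)" by (auto simp: bdries_iff)
  qed
  then obtain w where w: "\<And>j. \<exists>e. w j \<in> CM (aseq j) e" "\<And>j. pm (aseq j) z = pm (aseq j) (D (w j))"
    by metis
  have wBA: "BA (w j)" for j using w(1)[of j] CM_BA by blast
  define y where "y = Dp w"
  have yPP: "y \<in> PP"
    unfolding PP_def FZ_def mem_Collect_eq
  proof (intro allI)
    fix j
    obtain e1 where e1: "w j \<in> CM (aseq j) e1" using w(1) by blast
    obtain e2 where e2: "w (Suc j) \<in> CM (aseq (Suc j)) e2" using w(1) by blast
    have c1: "w j \<in> CM (aseq j) (max e1 e2)" using CM_mono[OF e1] by simp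
    have c2: "pm (aseq j) (w (Suc j)) \<in> CM (aseq j) (max e1 e2)" using CM_mono[OF pm_CM2[OF e2]] by simp
    have h: "pm (aseq j) (D (w (Suc j))) = pm (aseq j) z"
    proof -
      have "pm (aseq j) (D (w (Suc j))) = pm (aseq j) (pm (aseq (Suc j)) (D (w (Suc j))))"
        using pm_pm[OF decS[of j]] by simp
      also have "\<dots> = pm (aseq j) (pm (aseq (Suc j)) z)" using w(2)[of "Suc j"] by simp
      also have "\<dots> = pm (aseq j) z" using pm_pm[OF decS[of j]] by simp
      finally show ?thesis .
    qed
    have "pm (aseq j) (D (y j)) = pm (aseq j) (D (w j)) - pm (aseq j) (D (pm (aseq j) (w (Suc j))))"
      unfolding y_def Dp_def using DA_diff[OF CM_BA[OF c1] CM_BA[OF c2]] by (simp add: pm_diff)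
    also have "\<dots> = pm (aseq j) z - pm (aseq j) (D (w (Suc j)))" using w(2) D_pmA[OF wBA] by simp
    finally have "pm (aseq j) (D (y j)) = 0" using h by simp
    moreover have "y j \<in> CM (aseq j) (max e1 e2)" unfolding y_def Dp_def using CM_diff[OF c1 c2] .
    ultimately show "\<exists>b. y j \<in> Z (aseq j) b" unfolding cycles_iff by blast
  qed
  obtain e0 where e0: "w 0 \<in> CM (aseq 0) e0" using w(1) by blast
  define E where "E = max e0 (aseq 0)"
  define R where "R j = (\<Sum>i<j. lo (aseq i) (w (Suc i)))" for j
  define v where "v j = w 0 + R j" for j
  have vN: "v j \<in> NN E" for j
  proof -
    have "R j \<in> NN (aseq 0)" unfolding R_def by (intro NB_sum lo_NN0 wBA) auto
    then have "R j \<in> NN E" "w 0 \<in> NN E" using NB_mono CM_NB[OF e0] by (auto simp: E_def)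
    then show ?thesis unfolding v_def by (intro NB_add)
  qed
  have uu_eq: "uu y j = w j - v j" for j
    unfolding uu_def y_def telesc v_def R_def by (simp add: algebra_simps)
  have "pm (aseq j) (z - zz y) = pm (aseq j) (D (v j))" for j
  proof -
    have vBA: "BA (v j)" using vN by (rule NN_BA)
    have "pm (aseq j) (zz y) = pm (aseq j) (D (w j)) - pm (aseq j) (D (v j))"
      using K[OF yPP] uu_eq DA_diff[OF wBA vBA] by (simp add: pm_diff)
    then show ?thesis using w(2)[of j] by (simp add: pm_diff)
  qed
  then have "\<And>j. \<exists>v \<in> NN E. pm (aseq j) (z - zz y) = pm (aseq j) (D v)" using vN by blast
  then have "\<forall>a. pm a (z - zz y) \<in> B a E" using BND unb by blast
  then show ?thesis using yPP by blast
qed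

end



lemma iso_common:
  fixes \<phi>a :: "'p \<Rightarrow> 'a" and \<phi>b :: "'p \<Rightarrow> 'b" and S :: "('a, 'k) vs" and T :: "('b, 'k) vs"
    and pl :: "'p \<Rightarrow> 'p \<Rightarrow> 'p" and sm :: "'k \<Rightarrow> 'p \<Rightarrow> 'p"
  assumes im1: "\<phi>a ` P = vcarr S" and im2: "\<phi>b ` P = vcarr T"
    and pl: "\<And>x y. x \<in> P \<Longrightarrow> y \<in> P \<Longrightarrow> pl x y \<in> P"
    and sm: "\<And>k x. x \<in> P \<Longrightarrow> sm k x \<in> P"
    and add1: "\<And>x y. x \<in> P \<Longrightarrow> y \<in> P \<Longrightarrow> vadd S (\<phi>a x) (\<phi>a y) = \<phi>a (pl x y)"
    and add2: "\<And>x y. x \<in> P \<Longrightarrow> y \<in> P \<Longrightarrow> vadd T (\<phi>b x) (\<phi>b y) = \<phi>b (pl x y)"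
    and sm1: "\<And>k x. x \<in> P \<Longrightarrow> vsmul S k (\<phi>a x) = \<phi>a (sm k x)"
    and sm2: "\<And>k x. x \<in> P \<Longrightarrow> vsmul T k (\<phi>b x) = \<phi>b (sm k x)"
    and fib: "\<And>x y. x \<in> P \<Longrightarrow> y \<in> P \<Longrightarrow> \<phi>a x = \<phi>a y \<longleftrightarrow> \<phi>b x = \<phi>b y"
  shows "vs_iso S T"
proof -
  define pre where "pre s = (SOME x. x \<in> P \<and> \<phi>a x = s)" for s
  have pre: "pre s \<in> P \<and> \<phi>a (pre s) = s" if "s \<in> vcarr S" for s
  proof -
    have "s \<in> \<phi>a ` P" using that im1 by simp
    then obtain x where "x \<in> P" "\<phi>a x = s" by (auto elim!: imageE)
    then show ?thesis unfolding pre_def using someI[of "\<lambda>x. x \<in> P \<and> \<phi>a x = s" x] by blast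
  qed
  define \<psi> where "\<psi> s = \<phi>b (pre s)" for s
  have psi: "\<psi> (\<phi>a x) = \<phi>b x" if "x \<in> P" for x
  proof -
    have s: "\<phi>a x \<in> vcarr S" using that im1 by blast
    then show ?thesis unfolding \<psi>_def using fib[OF _ that, of "pre (\<phi>a x)"] pre[OF s] by blast
  qed
  have "bij_betw \<psi> (vcarr S) (vcarr T)"
  proof (rule bij_betw_imageI)
    show "inj_on \<psi> (vcarr S)"
    proof
      fix s s' assume s: "s \<in> vcarr S" and s': "s' \<in> vcarr S" and e: "\<psi> s = \<psi> s'"
      then show "s = s'" unfolding \<psi>_def using pre[OF s] pre[OF s'] fib by metis
    qed
    show "\<psi> ` vcarr S = vcarr T"
    proof (intro equalityI subsetI)
      fix t assume "t \<in> \<psi> ` vcarr S"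
      then show "t \<in> vcarr T" unfolding \<psi>_def using pre im2 by blast
    next
      fix t assume "t \<in> vcarr T"
      then obtain x where x: "x \<in> P" "t = \<phi>b x" using im2 by blast
      then have "\<phi>a x \<in> vcarr S" using im1 by blast
      then show "t \<in> \<psi> ` vcarr S" using psi[OF x(1)] x(2) by (intro image_eqI[where x="\<phi>a x"]) simp_all
    qed
  qed
  moreover have "\<forall>s\<in>vcarr S. \<forall>s'\<in>vcarr S. \<psi> (vadd S s s') = vadd T (\<psi> s) (\<psi> s')"
  proof (intro ballI)
    fix s s' assume s: "s \<in> vcarr S" and s': "s' \<in> vcarr S"
    obtain x x' where x: "x \<in> P" "s = \<phi>a x" and x': "x' \<in> P" "s' = \<phi>a x'" using s s' im1 by blast
    show "\<psi> (vadd S s s') = vadd T (\<psi> s) (\<psi> s')"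
      unfolding x(2) x'(2) add1[OF x(1) x'(1)] psi[OF pl[OF x(1) x'(1)]] psi[OF x(1)] psi[OF x'(1)]
        add2[OF x(1) x'(1)] ..
  qed
  moreover have "\<forall>k. \<forall>s\<in>vcarr S. \<psi> (vsmul S k s) = vsmul T k (\<psi> s)"
  proof (intro allI ballI)
    fix k s assume s: "s \<in> vcarr S"
    obtain x where x: "x \<in> P" "s = \<phi>a x" using s im1 by blast
    show "\<psi> (vsmul S k s) = vsmul T k (\<psi> s)"
      unfolding x(2) sm1[OF x(1)] psi[OF sm[OF x(1)]] psi[OF x(1)] sm2[OF x(1)] ..
  qed
  ultimately show ?thesis unfolding vs_iso_def by blast
qed

context FTA begin

definition gc :: "real \<Rightarrow> ('c \<Rightarrow> 'k) \<Rightarrow> (real \<times> ('c \<Rightarrow> 'k) set) set" where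
  "gc a x = gcl a (SOME b. x \<in> Z a b) x"

lemma gc_eq: assumes "x \<in> Z a b" shows "gc a x = gcl a b x"
proof -
  have x0: "x \<in> Z a (SOME b. x \<in> Z a b)" using someI[of "\<lambda>b. x \<in> Z a b"] assms by blast
  define s0 where "s0 = (SOME b. x \<in> Z a b)"
  have m1: "gcl a (max b s0) x = gcl a s0 x" by (rule gcl_mono[OF x0[folded s0_def]]) simp
  have m2: "gcl a (max b s0) x = gcl a b x" by (rule gcl_mono[OF assms]) simp
  show ?thesis unfolding gc_def s0_def[symmetric] using m1 m2 by simp
qed

lemma FZ_Z: "x \<in> FZ a \<Longrightarrow> \<exists>b. x \<in> Z a b" by (simp add: FZ_def)

lemma gc_carr: assumes "x \<in> FZ a" shows "gc a x \<in> vcarr (GS a)"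
proof -
  obtain b where b: "x \<in> Z a b" using FZ_Z[OF assms] by blast
  show ?thesis unfolding gc_eq[OF b] by (rule gcl_carr[OF b])
qed

lemma gc_add: assumes "x \<in> FZ a" "x' \<in> FZ a" shows "vadd (GS a) (gc a x) (gc a x') = gc a (x + x')"
proof -
  obtain b b' where b: "x \<in> Z a b" and b': "x' \<in> Z a b'" using assms FZ_Z by blast
  have s: "x + x' \<in> Z a (max b b')" using Z_mono[OF b] Z_mono[OF b'] by (intro Z_add) auto
  show ?thesis using gcl_add[OF b b'] unfolding gc_eq[OF b] gc_eq[OF b'] gc_eq[OF s] .
qed

lemma gc_smul: assumes "x \<in> FZ a" shows "vsmul (GS a) k (gc a x) = gc a (\<lambda>c. k * x c)"
proof -
  obtain b where b: "x \<in> Z a b" using assms FZ_Z by blast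
  show ?thesis unfolding gc_eq[OF b] gc_eq[OF Z_smul[OF b]] by (rule gcl_smul[OF b])
qed

lemma gc_iff: assumes "x \<in> FZ a" "x' \<in> FZ a" shows "gc a x = gc a x' \<longleftrightarrow> (\<exists>b. x - x' \<in> B a b)"
proof -
  obtain b b' where b: "x' \<in> Z a b" and b': "x \<in> Z a b'" using assms FZ_Z by blast
  have "gc a x = gc a x' \<longleftrightarrow> (\<exists>e. b \<le> e \<and> b' \<le> e \<and> x - x' \<in> B a e)"
    unfolding gc_eq[OF b] gc_eq[OF b'] by (rule gcl_eq[OF b b'])
  also have "\<dots> \<longleftrightarrow> (\<exists>e. x - x' \<in> B a e)"
  proof
    assume "\<exists>e. b \<le> e \<and> b' \<le> e \<and> x - x' \<in> B a e" then show "\<exists>e. x - x' \<in> B a e" by blast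
  next
    assume "\<exists>e. x - x' \<in> B a e"
    then obtain e where e: "x - x' \<in> B a e" by blast
    have "x - x' \<in> B a (max e (max b b'))" by (rule B_mono[OF e]) simp
    then show "\<exists>e. b \<le> e \<and> b' \<le> e \<and> x - x' \<in> B a e" by (intro exI[of _ "max e (max b b')"]) auto
  qed
  finally show ?thesis .
qed

lemma gc_pi: assumes "x \<in> FZ a1" "a1 \<le> a2" shows "piG C f m a2 a1 (gc a1 x) = gc a2 (pm a2 x)"
proof -
  obtain b where b: "x \<in> Z a1 b" using assms FZ_Z by blast
  show ?thesis unfolding gc_eq[OF b] gc_eq[OF Z_pm[OF b assms(2)]] by (rule piG_gcl[OF assms(2) b])
qed

abbreviation "PG \<equiv> prodv (\<lambda>j. GS (aseq j))"

definition GG :: "(nat \<Rightarrow> 'c \<Rightarrow> 'k) \<Rightarrow> nat \<Rightarrow> (real \<times> ('c \<Rightarrow> 'k) set) set" where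
  "GG y = (\<lambda>j. gc (aseq j) (y j))"

lemma PG_carr: "vcarr PG = {X. \<forall>j. X j \<in> vcarr (GS (aseq j))}" by (simp add: prodv_def)
lemma PG_add: "vadd PG X Y = (\<lambda>j. vadd (GS (aseq j)) (X j) (Y j))" by (simp add: prodv_def)
lemma PG_smul: "vsmul PG k X = (\<lambda>j. vsmul (GS (aseq j)) k (X j))" by (simp add: prodv_def)

lemma GG_carr: "y \<in> PP \<Longrightarrow> GG y \<in> vcarr PG"
  unfolding PG_carr GG_def using gc_carr PP_FZ by blast

lemma PG_GG: assumes "X \<in> vcarr PG" shows "\<exists>y \<in> PP. X = GG y"
proof -
  have "\<forall>j. \<exists>x. x \<in> FZ (aseq j) \<and> X j = gc (aseq j) x"
  proof
    fix j have "X j \<in> vcarr (GS (aseq j))" using assms PG_carr by blast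
    then obtain b z where "z \<in> Z (aseq j) b" "X j = gcl (aseq j) b z" unfolding GS_carr by blast
    then show "\<exists>x. x \<in> FZ (aseq j) \<and> X j = gc (aseq j) x" using gc_eq FZ_def by blast
  qed
  then obtain y where "\<And>j. y j \<in> FZ (aseq j) \<and> X j = gc (aseq j) (y j)" by metis
  then show ?thesis unfolding PP_def GG_def by auto
qed

lemma GG_add: "y \<in> PP \<Longrightarrow> y' \<in> PP \<Longrightarrow> vadd PG (GG y) (GG y') = GG (y + y')"
  unfolding PG_add GG_def using gc_add PP_FZ by simp

abbreviation sm :: "'k \<Rightarrow> (nat \<Rightarrow> 'c \<Rightarrow> 'k) \<Rightarrow> (nat \<Rightarrow> 'c \<Rightarrow> 'k)" where
  "sm k y \<equiv> (\<lambda>j c. k * y j c)"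

lemma GG_smul: "y \<in> PP \<Longrightarrow> vsmul PG k (GG y) = GG (sm k y)"
  unfolding PG_smul GG_def using gc_smul PP_FZ by simp

lemma Delta_GG: assumes g: "g \<in> PP" shows "Delta C f m aseq (GG g) = GG (Dp g)"
proof
  fix j
  have f1: "g (Suc j) \<in> FZ (aseq (Suc j))" using PP_FZ[OF g] .
  have f2: "pm (aseq j) (g (Suc j)) \<in> FZ (aseq j)" using FZ_pm[OF f1 decS] .
  have f3: "g j \<in> FZ (aseq j)" using PP_FZ[OF g] .
  have "Delta C f m aseq (GG g) j = vadd (GS (aseq j)) (gc (aseq j) (g j))
      (vsmul (GS (aseq j)) (-1) (gc (aseq j) (pm (aseq j) (g (Suc j)))))"
    unfolding Delta_def GG_def using gc_pi[OF f1 decS] by simp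
  also have "\<dots> = gc (aseq j) (g j + (\<lambda>c. (-1) * pm (aseq j) (g (Suc j)) c))"
    using gc_smul[OF f2, of "-1"] gc_add[OF f3 FZ_smul[OF f2, of "-1"]] by simp
  also have "g j + (\<lambda>c. (-1) * pm (aseq j) (g (Suc j)) c) = Dp g j"
    by (simp add: Dp_def fun_eq_iff)
  finally show "Delta C f m aseq (GG g) j = GG (Dp g) j" by (simp add: GG_def)
qed

lemma GG_iff: assumes "y \<in> PP" "y' \<in> PP"
  shows "GG y = GG y' \<longleftrightarrow> (\<forall>j. \<exists>b. y j - y' j \<in> B (aseq j) b)"
  unfolding GG_def fun_eq_iff using gc_iff[OF PP_FZ[OF assms(1)] PP_FZ[OF assms(2)]] by blast

abbreviation "WW \<equiv> Delta C f m aseq ` vcarr PG"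

definition cos :: "(nat \<Rightarrow> (real \<times> ('c \<Rightarrow> 'k) set) set) \<Rightarrow> (nat \<Rightarrow> (real \<times> ('c \<Rightarrow> 'k) set) set) set" where
  "cos X = {vadd PG X w | w. w \<in> WW}"

lemma Dp_add: "Dp (g + g') = Dp g + Dp g'" by (simp add: Dp_def fun_eq_iff pmap_def)
lemma Dp_smul: "Dp (sm k g) = sm k (Dp g)" by (simp add: Dp_def fun_eq_iff pmap_def algebra_simps)
lemma Dp_zero: "Dp 0 = 0" by (simp add: Dp_def fun_eq_iff pmap_def)
lemma Dp_uminus: "Dp (- g) = - Dp g" by (simp add: Dp_def fun_eq_iff pmap_def)
lemma Dp_diff: "Dp (g - g') = Dp g - Dp g'" by (simp add: Dp_def fun_eq_iff pmap_def)

lemma cos_GG: assumes y: "y \<in> PP" shows "cos (GG y) = {GG (y + Dp g) | g. g \<in> PP}"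
proof (intro equalityI subsetI)
  fix u assume "u \<in> cos (GG y)"
  then obtain X where X: "X \<in> vcarr PG" "u = vadd PG (GG y) (Delta C f m aseq X)" unfolding cos_def by blast
  obtain g where g: "g \<in> PP" "X = GG g" using PG_GG[OF X(1)] by blast
  have "u = GG (y + Dp g)" using X(2) g Delta_GG[OF g(1)] GG_add[OF y PP_Dp[OF g(1)]] by simp
  then show "u \<in> {GG (y + Dp g) | g. g \<in> PP}" using g(1) by blast
next
  fix u assume "u \<in> {GG (y + Dp g) | g. g \<in> PP}"
  then obtain g where g: "g \<in> PP" "u = GG (y + Dp g)" by blast
  have "u = vadd PG (GG y) (Delta C f m aseq (GG g))"
    using g Delta_GG[OF g(1)] GG_add[OF y PP_Dp[OF g(1)]] by simp
  then show "u \<in> cos (GG y)" unfolding cos_def using GG_carr[OF g(1)] by blast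
qed

abbreviation "LIMv \<equiv> lim1 C f m aseq"

definition phi2 where "phi2 y = cos (GG y)"

lemma LIM_carr: "vcarr LIMv = cos ` vcarr PG"
  by (simp add: lim1_def quotv_def cos_def)

lemma phi2_im: "phi2 ` PP = vcarr LIMv"
proof -
  have "vcarr PG = GG ` PP" using GG_carr PG_GG by blast
  then show ?thesis unfolding LIM_carr phi2_def by (simp add: image_image)
qed

lemma phi2_add: assumes y: "y \<in> PP" and y': "y' \<in> PP"
  shows "vadd LIMv (phi2 y) (phi2 y') = phi2 (y + y')"
proof -
  have "vadd LIMv (phi2 y) (phi2 y') = {vadd PG u u' | u u'. u \<in> cos (GG y) \<and> u' \<in> cos (GG y')}"
    by (simp add: lim1_def quotv_def phi2_def)
  also have "\<dots> = cos (GG (y + y'))"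
  proof (intro equalityI subsetI)
    fix t assume "t \<in> {vadd PG u u' | u u'. u \<in> cos (GG y) \<and> u' \<in> cos (GG y')}"
    then obtain g g' where g: "g \<in> PP" "g' \<in> PP" "t = vadd PG (GG (y + Dp g)) (GG (y' + Dp g'))"
      unfolding cos_GG[OF y] cos_GG[OF y'] by blast
    have "t = GG (y + y' + Dp (g + g'))"
      using g GG_add[OF PP_add[OF y PP_Dp[OF g(1)]] PP_add[OF y' PP_Dp[OF g(2)]]]
      by (simp add: Dp_add algebra_simps)
    then show "t \<in> cos (GG (y + y'))" unfolding cos_GG[OF PP_add[OF y y']] using PP_add[OF g(1,2)] by blast
  next
    fix t assume "t \<in> cos (GG (y + y'))"
    then obtain g where g: "g \<in> PP" "t = GG (y + y' + Dp g)" unfolding cos_GG[OF PP_add[OF y y']] by blast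
    have "t = vadd PG (GG (y + Dp g)) (GG (y' + Dp 0))"
      using g GG_add[OF PP_add[OF y PP_Dp[OF g(1)]] PP_add[OF y' PP_Dp[OF PP_zero]]]
      by (simp add: Dp_zero algebra_simps)
    moreover have "GG (y + Dp g) \<in> cos (GG y)" "GG (y' + Dp 0) \<in> cos (GG y')"
      unfolding cos_GG[OF y] cos_GG[OF y'] using g(1) PP_zero by blast+
    ultimately show "t \<in> {vadd PG u u' | u u'. u \<in> cos (GG y) \<and> u' \<in> cos (GG y')}" by blast
  qed
  finally show ?thesis unfolding phi2_def .
qed

lemma phi2_smul: assumes y: "y \<in> PP"
  shows "vsmul LIMv k (phi2 y) = phi2 (sm k y)"
proof -
  have "vsmul LIMv k (phi2 y) = {vadd PG (vsmul PG k u) w | u w. u \<in> cos (GG y) \<and> w \<in> WW}"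
    by (simp add: lim1_def quotv_def phi2_def)
  also have "\<dots> = cos (GG (sm k y))"
  proof (intro equalityI subsetI)
    fix t assume "t \<in> {vadd PG (vsmul PG k u) w | u w. u \<in> cos (GG y) \<and> w \<in> WW}"
    then obtain g X where g: "g \<in> PP" "X \<in> vcarr PG" "t = vadd PG (vsmul PG k (GG (y + Dp g))) (Delta C f m aseq X)"
      unfolding cos_GG[OF y] by blast
    obtain h where h: "h \<in> PP" "X = GG h" using PG_GG[OF g(2)] by blast
    have yg: "y + Dp g \<in> PP" using PP_add[OF y PP_Dp[OF g(1)]] .
    have "t = GG (sm k (y + Dp g) + Dp h)"
      using g(3) h GG_smul[OF yg] Delta_GG[OF h(1)] GG_add[OF PP_smul[OF yg] PP_Dp[OF h(1)]] by simp
    also have "sm k (y + Dp g) + Dp h = sm k y + Dp (sm k g + h)"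
      by (simp add: Dp_add Dp_smul fun_eq_iff algebra_simps)
    finally show "t \<in> cos (GG (sm k y))" unfolding cos_GG[OF PP_smul[OF y]]
      using PP_add[OF PP_smul[OF g(1)] h(1)] by blast
  next
    fix t assume "t \<in> cos (GG (sm k y))"
    then obtain h where h: "h \<in> PP" "t = GG (sm k y + Dp h)" unfolding cos_GG[OF PP_smul[OF y]] by blast
    have y0: "y + Dp 0 \<in> PP" using PP_add[OF y PP_Dp[OF PP_zero]] .
    have "t = vadd PG (vsmul PG k (GG (y + Dp 0))) (Delta C f m aseq (GG h))"
      using h GG_smul[OF y0] Delta_GG[OF h(1)] GG_add[OF PP_smul[OF y0] PP_Dp[OF h(1)]] by (simp add: Dp_zero)
    moreover have "GG (y + Dp 0) \<in> cos (GG y)" unfolding cos_GG[OF y] using PP_zero by blast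
    moreover have "Delta C f m aseq (GG h) \<in> WW" using GG_carr[OF h(1)] by blast
    ultimately show "t \<in> {vadd PG (vsmul PG k u) w | u w. u \<in> cos (GG y) \<and> w \<in> WW}" by blast
  qed
  finally show ?thesis unfolding phi2_def .
qed

lemma phi2_fib: assumes y: "y \<in> PP" and y': "y' \<in> PP"
  shows "phi2 y = phi2 y' \<longleftrightarrow> (\<exists>g \<in> PP. \<forall>j. \<exists>b. (y - y') j - Dp g j \<in> B (aseq j) b)"
proof
  assume e: "phi2 y = phi2 y'"
  have "GG (y' + Dp 0) \<in> cos (GG y')" unfolding cos_GG[OF y'] using PP_zero by blast
  then have "GG y' \<in> cos (GG y)" using e by (simp add: phi2_def Dp_zero)
  then obtain g where g: "g \<in> PP" "GG y' = GG (y + Dp g)" unfolding cos_GG[OF y] by blast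
  then have "\<forall>j. \<exists>b. y' j - (y + Dp g) j \<in> B (aseq j) b"
    using GG_iff[OF y' PP_add[OF y PP_Dp[OF g(1)]]] by simp
  then have "\<forall>j. \<exists>b. (y - y') j - Dp (- g) j \<in> B (aseq j) b"
  proof (intro allI)
    fix j assume "\<forall>j. \<exists>b. y' j - (y + Dp g) j \<in> B (aseq j) b"
    then obtain b where "y' j - (y + Dp g) j \<in> B (aseq j) b" by blast
    then have "- (y' j - (y + Dp g) j) \<in> B (aseq j) b" by (rule B_uminus)
    moreover have "- (y' j - (y + Dp g) j) = (y - y') j - Dp (- g) j" by (simp add: Dp_uminus)
    ultimately have "(y - y') j - Dp (- g) j \<in> B (aseq j) b" by (simp only:)
    then show "\<exists>b. (y - y') j - Dp (- g) j \<in> B (aseq j) b" by blast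
  qed
  then show "\<exists>g \<in> PP. \<forall>j. \<exists>b. (y - y') j - Dp g j \<in> B (aseq j) b" using PP_uminus[OF g(1)] by blast
next
  assume "\<exists>g \<in> PP. \<forall>j. \<exists>b. (y - y') j - Dp g j \<in> B (aseq j) b"
  then obtain g0 where g0: "g0 \<in> PP" "\<And>j. \<exists>b. (y - y') j - Dp g0 j \<in> B (aseq j) b" by blast
  have "cos (GG y) = cos (GG y')"
    unfolding cos_GG[OF y] cos_GG[OF y']
  proof (intro equalityI subsetI)
    fix t assume "t \<in> {GG (y + Dp g) | g. g \<in> PP}"
    then obtain g where g: "g \<in> PP" "t = GG (y + Dp g)" by blast
    have "GG (y + Dp g) = GG (y' + Dp (g + g0))"
      using GG_iff[OF PP_add[OF y PP_Dp[OF g(1)]] PP_add[OF y' PP_Dp[OF PP_add[OF g(1) g0(1)]]]] g0(2)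
      by (simp add: Dp_add algebra_simps)
    then show "t \<in> {GG (y' + Dp g) | g. g \<in> PP}" using g PP_add[OF g(1) g0(1)] by blast
  next
    fix t assume "t \<in> {GG (y' + Dp g) | g. g \<in> PP}"
    then obtain g where g: "g \<in> PP" "t = GG (y' + Dp g)" by blast
    have "GG (y' + Dp g) = GG (y + Dp (g - g0))"
    proof -
      have "\<forall>j. \<exists>b. (y' + Dp g) j - (y + Dp (g - g0)) j \<in> B (aseq j) b"
      proof
        fix j obtain b where "(y - y') j - Dp g0 j \<in> B (aseq j) b" using g0(2) by blast
        then have "- ((y - y') j - Dp g0 j) \<in> B (aseq j) b" by (rule B_uminus)
        moreover have "- ((y - y') j - Dp g0 j) = (y' + Dp g) j - (y + Dp (g - g0)) j"
          by (simp add: Dp_diff algebra_simps)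
        ultimately have "(y' + Dp g) j - (y + Dp (g - g0)) j \<in> B (aseq j) b" by (simp only:)
        then show "\<exists>b. (y' + Dp g) j - (y + Dp (g - g0)) j \<in> B (aseq j) b" by blast
      qed
      then show ?thesis
        using GG_iff[OF PP_add[OF y' PP_Dp[OF g(1)]] PP_add[OF y PP_Dp[OF PP_diff[OF g(1) g0(1)]]]] by simp
    qed
    then show "t \<in> {GG (y + Dp g) | g. g \<in> PP}" using g PP_diff[OF g(1) g0(1)] by blast
  qed
  then show "phi2 y = phi2 y'" by (simp add: phi2_def)
qed

end



context FTA begin

abbreviation "KK \<equiv> kerkappa C f m"

definition phi1 where "phi1 y = ocl (aseq 0) (zz y)"

lemma KK_carr: "vcarr KK = vcarr OH \<inter> {\<xi>. kappa C f m \<xi> = vzero (underHM C f m)}"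
  by (simp add: kerkappa_def subv_def)
lemma KK_add: "vadd KK = vadd OH" by (simp add: kerkappa_def subv_def)
lemma KK_smul: "vsmul KK = vsmul OH" by (simp add: kerkappa_def subv_def)

lemma pmzz_B: assumes y: "y \<in> PP" shows "\<exists>e. pm a (zz y) \<in> B a e"
proof -
  obtain j where j: "aseq j \<le> a" using unb by blast
  obtain b' where b': "uu y j \<in> NN b'" using uu_BA[OF y] by (auto simp: BA_def)
  have "pm a (zz y) = pm a (pm (aseq j) (zz y))" using pm_pm[OF j] by simp
  also have "\<dots> = pm a (D (uu y j))" using K[OF y] pm_pm[OF j] by simp
  also have "\<dots> = pm a (D (pm a (uu y j)))" using D_pm[OF b'] by simp
  finally show ?thesis using pm_CM[OF b'] by (auto simp: bdries_iff)
qed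

lemma kappa_zero_iff: assumes z: "z \<in> GZ b"
  shows "kappa C f m (ocl b z) = vzero (underHM C f m) \<longleftrightarrow> (\<forall>a. \<exists>e. pm a z \<in> B a e)"
proof -
  have "kappa C f m (ocl b z) = vzero (underHM C f m) \<longleftrightarrow> (\<forall>a. gcl a b (pm a z) = gcl a b 0)"
    unfolding kappa_ocl[OF z] UH_zero fun_eq_iff using gcl_zero by metis
  also have "\<dots> \<longleftrightarrow> (\<forall>a. \<exists>e. pm a z \<in> B a e)"
  proof (intro iff_allI)
    fix a
    have "gcl a b (pm a z) = gcl a b 0 \<longleftrightarrow> (\<exists>e. b \<le> e \<and> b \<le> e \<and> pm a z - 0 \<in> B a e)"
      by (rule gcl_eq[OF Z_zero GZ_pm[OF z]])
    also have "\<dots> \<longleftrightarrow> (\<exists>e. pm a z \<in> B a e)"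
    proof
      assume "\<exists>e. pm a z \<in> B a e"
      then obtain e where e: "pm a z \<in> B a e" by blast
      have "pm a z \<in> B a (max e b)" by (rule B_mono[OF e]) simp
      then show "\<exists>e. b \<le> e \<and> b \<le> e \<and> pm a z - 0 \<in> B a e" by (intro exI[of _ "max e b"]) simp
    qed auto
    finally show "gcl a b (pm a z) = gcl a b 0 \<longleftrightarrow> (\<exists>e. pm a z \<in> B a e)" .
  qed
  finally show ?thesis .
qed

lemma phi1_carr: assumes y: "y \<in> PP" shows "phi1 y \<in> vcarr KK"
proof -
  have z: "zz y \<in> GZ (aseq 0)" by (rule zz_GZ[OF y])
  have "kappa C f m (phi1 y) = vzero (underHM C f m)"
    unfolding phi1_def kappa_zero_iff[OF z] using pmzz_B[OF y] by blast
  then show ?thesis unfolding KK_carr phi1_def using ocl_carr[OF z] by simp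
qed

lemma phi1_surj: assumes xi: "\<xi> \<in> vcarr KK" shows "\<exists>y \<in> PP. phi1 y = \<xi>"
proof -
  have xiO: "\<xi> \<in> vcarr OH" and k0: "kappa C f m \<xi> = vzero (underHM C f m)" using xi KK_carr by auto
  obtain b x where bx: "\<xi> = dircls LS iL b x" "x \<in> vcarr (LS b)" using xiO OH_carr by blast
  obtain z where z: "z \<in> GZ b" "fam b z = x" using MLift1[OF bx(2)] by blast
  define b' where "b' = max b (aseq 0)"
  have z': "z \<in> GZ b'" using GZ_mono[OF z(1)] by (simp add: b'_def)
  have xi_eq: "\<xi> = ocl b' z" using bx(1) z(2) ocl_mono[OF z(1)] by (simp add: ocl_def b'_def)
  have zB: "\<forall>a. \<exists>e. pm a z \<in> B a e" using k0 kappa_zero_iff[OF z'] xi_eq by simp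
  obtain y E where y: "y \<in> PP" "\<forall>a. pm a (z - zz y) \<in> B a E" using surj_core[OF z'] zB by blast
  have "ocl (aseq 0) (zz y) = ocl b' z"
  proof -
    have "\<forall>a. pm a (zz y - z) \<in> B a (max E b')"
    proof
      fix a have "pm a (z - zz y) \<in> B a (max E b')" by (rule B_mono) (use y(2) in auto)
      then have "- pm a (z - zz y) \<in> B a (max E b')" by (rule B_uminus)
      then show "pm a (zz y - z) \<in> B a (max E b')" by (simp add: pm_diff)
    qed
    then have "\<exists>e. b' \<le> e \<and> aseq 0 \<le> e \<and> (\<forall>a. pm a (zz y - z) \<in> B a e)"
      by (intro exI[of _ "max E b'"]) (auto simp: b'_def)
    then show ?thesis using ocl_eq[OF z' zz_GZ[OF y(1)]] by blast
  qed
  then show ?thesis using y(1) xi_eq unfolding phi1_def by blast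
qed

lemma phi1_im: "phi1 ` PP = vcarr KK"
  using phi1_carr phi1_surj by blast

lemma phi1_add: "y \<in> PP \<Longrightarrow> y' \<in> PP \<Longrightarrow> vadd KK (phi1 y) (phi1 y') = phi1 (y + y')"
  unfolding KK_add phi1_def using ocl_add[OF zz_GZ zz_GZ] zz_add by simp

lemma phi1_smul: "y \<in> PP \<Longrightarrow> vsmul KK k (phi1 y) = phi1 (sm k y)"
  unfolding KK_smul phi1_def using ocl_smul[OF zz_GZ] zz_smul by simp

lemma phi1_fib: assumes y: "y \<in> PP" and y': "y' \<in> PP"
  shows "phi1 y = phi1 y' \<longleftrightarrow> (\<exists>g \<in> PP. \<forall>j. \<exists>b. (y - y') j - Dp g j \<in> B (aseq j) b)"
proof -
  have d: "y - y' \<in> PP" by (rule PP_diff[OF y y'])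
  have "phi1 y = phi1 y' \<longleftrightarrow> (\<exists>e. aseq 0 \<le> e \<and> aseq 0 \<le> e \<and> (\<forall>a. pm a (zz y - zz y') \<in> B a e))"
    unfolding phi1_def by (rule ocl_eq[OF zz_GZ[OF y'] zz_GZ[OF y]])
  also have "\<dots> \<longleftrightarrow> (\<exists>e. \<forall>a. pm a (zz (y - y')) \<in> B a e)"
  proof
    assume "\<exists>e. \<forall>a. pm a (zz (y - y')) \<in> B a e"
    then obtain e where e: "\<forall>a. pm a (zz (y - y')) \<in> B a e" by blast
    have "\<forall>a. pm a (zz y - zz y') \<in> B a (max e (aseq 0))"
    proof
      fix a have "pm a (zz y - zz y') \<in> B a e" using e zz_diff[OF y y'] by simp
      then show "pm a (zz y - zz y') \<in> B a (max e (aseq 0))" by (rule B_mono) simp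
    qed
    then show "\<exists>e. aseq 0 \<le> e \<and> aseq 0 \<le> e \<and> (\<forall>a. pm a (zz y - zz y') \<in> B a e)"
      by (intro exI[of _ "max e (aseq 0)"]) simp
  qed (use zz_diff[OF y y'] in auto)
  also have "\<dots> \<longleftrightarrow> (\<exists>g \<in> PP. \<forall>j. \<exists>b. (y - y') j - Dp g j \<in> B (aseq j) b)"
  proof
    assume "\<exists>e. \<forall>a. pm a (zz (y - y')) \<in> B a e"
    then obtain e where "\<And>a. pm a (zz (y - y')) \<in> B a e" by blast
    then obtain g where g: "g \<in> PP" "\<forall>j. (y - y') j - Dp g j = 0" using C1a[OF d] by blast
    have "\<forall>j. \<exists>b. (y - y') j - Dp g j \<in> B (aseq j) b"
    proof
      fix j show "\<exists>b. (y - y') j - Dp g j \<in> B (aseq j) b" unfolding g(2)[rule_format] using B_zero by blast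
    qed
    then show "\<exists>g \<in> PP. \<forall>j. \<exists>b. (y - y') j - Dp g j \<in> B (aseq j) b" using g(1) by blast
  next
    assume "\<exists>g \<in> PP. \<forall>j. \<exists>b. (y - y') j - Dp g j \<in> B (aseq j) b"
    then show "\<exists>e. \<forall>a. pm a (zz (y - y')) \<in> B a e" using C1b[OF d] by blast
  qed
  finally show ?thesis .
qed

theorem main_iso: "vs_iso KK LIMv"
proof (rule iso_common[where P=PP and \<phi>a=phi1 and \<phi>b=phi2 and pl="(+)" and sm=sm])
  show "phi1 ` PP = vcarr KK" by (rule phi1_im)
  show "phi2 ` PP = vcarr LIMv" by (rule phi2_im)
  show "\<And>x y. x \<in> PP \<Longrightarrow> y \<in> PP \<Longrightarrow> x + y \<in> PP" by (rule PP_add)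
  show "\<And>k x. x \<in> PP \<Longrightarrow> sm k x \<in> PP" by (rule PP_smul)
  show "\<And>x y. x \<in> PP \<Longrightarrow> y \<in> PP \<Longrightarrow> vadd KK (phi1 x) (phi1 y) = phi1 (x + y)" by (rule phi1_add)
  show "\<And>x y. x \<in> PP \<Longrightarrow> y \<in> PP \<Longrightarrow> vadd LIMv (phi2 x) (phi2 y) = phi2 (x + y)" by (rule phi2_add)
  show "\<And>k x. x \<in> PP \<Longrightarrow> vsmul KK k (phi1 x) = phi1 (sm k x)" by (rule phi1_smul)
  show "\<And>k x. x \<in> PP \<Longrightarrow> vsmul LIMv k (phi2 x) = phi2 (sm k x)" by (rule phi2_smul)
  show "\<And>x y. x \<in> PP \<Longrightarrow> y \<in> PP \<Longrightarrow> phi1 x = phi1 y \<longleftrightarrow> phi2 x = phi2 y"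
    using phi1_fib phi2_fib by simp
qed

end

theorem mainTheorem11:
  fixes C :: "'c set" and f :: "'c \<Rightarrow> real" and m :: "'c \<Rightarrow> 'c \<Rightarrow> 'k::field"
    and aseq :: "nat \<Rightarrow> real"
  assumes "floer_triple C f m"
    and "\<forall>j. aseq (Suc j) \<le> aseq j"
    and "filterlim aseq at_bot sequentially"
  shows "vs_iso (kerkappa C f m) (lim1 C f m aseq)"
proof -
  interpret FTA C f m aseq
    by (rule FTA.intro[OF FT.intro[OF assms(1)]]) (unfold_locales, use assms in auto)
  show ?thesis by (rule main_iso)
qed


end
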